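(* Let $\gamma\in[0,\infty)$ and let $(\vec p_i(\cdot),q_i(\cdot),\vec r,s)$, $i=0,1$, be proper $m$-admissible quadruples with $\frac1{p_0(\cdot)}-\frac1{q_0(\cdot)}=\frac1{p_1(\cdot)}-\frac1{q_1(\cdot)}=\gamma$, and let $\vec w_0\in\mathcal{A}_{(\vec p_0(\cdot),q_0(\cdot)),(\vec r,s)}$, $\vec w_1\in\mathcal{A}_{(\vec p_1(\cdot),q_1(\cdot)),(\vec r,s)}$. For $\theta\in(0,1)$ define $\frac1{p_j(\cdot)}=\frac{1-\theta}{p_{0,j}(\cdot)}+\frac\theta{p_{1,j}(\cdot)}$, $\frac1{q(\cdot)}=\frac{1-\theta}{q_0(\cdot)}+\frac\theta{q_1(\cdot)}$, $w_j=w_{0,j}^{1-\theta}w_{1,j}^\theta$. Then (1) $(\vec p(\cdot),q(\cdot),\vec r,s)$ is a proper $m$-admissible quadruple with $\frac1{p(\cdot)}-\frac1{q(\cdot)}=\gamma$; (2) $\vec w\in\mathcal{A}_{(\vec p(\cdot),q(\cdot)),(\vec r,s)}$ and $[\vec w]_{\mathcal{A}_{(\vec p(\cdot),q(\cdot)),(\vec r,s)}}\le C[\vec w_0]^{1-\theta}_{\mathcal{A}_{(\vec p_0(\cdot),q_0(\cdot)),(\vec r,s)}}[\vec w_1]^\theta_{\mathcal{A}_{(\vec p_1(\cdot),q_1(\cdot)),(\vec r,s)}}$ with $C$ depending on $\vec p_0,q_0,\vec p_1,q_1,\vec r,s,\theta$.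
   Context: All exponents live on $\mathbb{R}^n$. $\mathscr{P}_0$: measurable exponents with $0<p_-\le p_+<\infty$; $\mathrm{LH}$: global log-Hölder class; Luxemburg quasinorms $\|f\|_{p(\cdot)}$. An $m$-admissible quadruple $(\vec p(\cdot),q(\cdot),\vec r,s)$: $\vec r\in(0,\infty)^m$, $s\in(0,\infty]$, $p_j\in\mathscr{P}_0$ with $r_j<(p_j)_-$, $q\in\mathscr{P}_0$ with $q_+<s$, and $\frac1{p}:=\sum_j\frac1{p_j}$ satisfies $\frac1p-\frac1q=\gamma$ for a constant $\gamma\ge0$; $\frac1r=\sum_j\frac1{r_j}$; proper means all $p_j,q\in\mathrm{LH}$. With $\nu_{\vec w}=\prod_jw_j$, $[\vec w]_{\mathcal{A}_{(\vec p(\cdot),q(\cdot)),(\vec r,s)}}=\sup_Q |Q|^{\gamma-(\frac1r-\frac1s)}\|\nu_{\vec w}\chi_Q\|_{1/(\frac1q-\frac1s)}\prod_j\|w_j^{-1}\chi_Q\|_{1/(\frac1{r_j}-\frac1{p_j})}$ over cubes $Q$ ($1/\infty=0$), and $\vec w$ belongs to the class if this is finite. *)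

theory Defs
  imports "HOL-Analysis.Analysis"
begin

text \<open>Exponents are real-valued functions on the ambient space 'a (a Euclidean space,
  playing the role of R^n).  Essential infimum / supremum of an exponent w.r.t. Lebesgue measure.\<close>

definition pminus :: "('a::euclidean_space \<Rightarrow> real) \<Rightarrow> real" where
  "pminus p = Sup {c. AE x in lebesgue. c \<le> p x}"

definition pplus :: "('a::euclidean_space \<Rightarrow> real) \<Rightarrow> real" where
  "pplus p = Inf {C. AE x in lebesgue. p x \<le> C}"

definition P0 :: "('a::euclidean_space \<Rightarrow> real) \<Rightarrow> bool" where
  "P0 p \<longleftrightarrow> p \<in> borel_measurable lebesgue
     \<and> (\<exists>C. AE x in lebesgue. p x \<le> C)
     \<and> (\<exists>c>0. AE x in lebesgue. c \<le> p x)
     \<and> 0 < pminus p \<and> pminus p \<le> pplus p"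

definition LH0 :: "('a::euclidean_space \<Rightarrow> real) \<Rightarrow> bool" where
  "LH0 p \<longleftrightarrow> (\<exists>C0. \<forall>x y. 0 < dist x y \<and> dist x y < 1/2 \<longrightarrow>
       \<bar>p x - p y\<bar> \<le> C0 / (- ln (dist x y)))"

definition LHinf :: "('a::euclidean_space \<Rightarrow> real) \<Rightarrow> bool" where
  "LHinf p \<longleftrightarrow> (\<exists>Cinf pinf. \<forall>x. \<bar>p x - pinf\<bar> \<le> Cinf / ln (exp 1 + norm x))"

definition LH :: "('a::euclidean_space \<Rightarrow> real) \<Rightarrow> bool" where
  "LH p \<longleftrightarrow> LH0 p \<and> LHinf p"

text \<open>Luxemburg (quasi)norm ||f||_{p(.)} = inf{lambda>0 : int |f/lambda|^p <= 1},
  valued in [0,infinity] (infinity if the set is empty).\<close>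
definition lux :: "('a::euclidean_space \<Rightarrow> real) \<Rightarrow> ('a \<Rightarrow> real) \<Rightarrow> ennreal" where
  "lux p f = Inf {ennreal l | l. 0 < l \<and>
       (\<integral>\<^sup>+ x. ennreal (\<bar>f x / l\<bar> powr p x) \<partial>lebesgue) \<le> 1}"

definition cube :: "'a::euclidean_space set \<Rightarrow> bool" where
  "cube Q \<longleftrightarrow> (\<exists>a l. 0 < l \<and> Q = cbox a (a + l *\<^sub>R One))"

definition inv_ext :: "ereal \<Rightarrow> real" where
  "inv_ext s = (if s = \<infinity> then 0 else 1 / real_of_ereal s)"

definition pvec :: "nat \<Rightarrow> (nat \<Rightarrow> 'a \<Rightarrow> real) \<Rightarrow> 'a \<Rightarrow> real" where
  "pvec m P x = 1 / (\<Sum>j<m. 1 / P j x)"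

definition rvec :: "nat \<Rightarrow> (nat \<Rightarrow> real) \<Rightarrow> real" where
  "rvec m r = 1 / (\<Sum>j<m. 1 / r j)"

definition admissible ::
  "nat \<Rightarrow> (nat \<Rightarrow> 'a::euclidean_space \<Rightarrow> real) \<Rightarrow> ('a \<Rightarrow> real) \<Rightarrow> (nat \<Rightarrow> real) \<Rightarrow> ereal \<Rightarrow> real \<Rightarrow> bool"
  where
  "admissible m P q r s \<gamma> \<longleftrightarrow>
     1 \<le> m \<and> (\<forall>j<m. 0 < r j) \<and> 0 < s \<and>
     (\<forall>j<m. P0 (P j) \<and> r j < pminus (P j)) \<and>
     P0 q \<and> ereal (pplus q) < s \<and>
     0 \<le> \<gamma> \<and> (AE x in lebesgue. 1 / pvec m P x - 1 / q x = \<gamma>)"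

definition proper_admissible ::
  "nat \<Rightarrow> (nat \<Rightarrow> 'a::euclidean_space \<Rightarrow> real) \<Rightarrow> ('a \<Rightarrow> real) \<Rightarrow> (nat \<Rightarrow> real) \<Rightarrow> ereal \<Rightarrow> real \<Rightarrow> bool"
  where
  "proper_admissible m P q r s \<gamma> \<longleftrightarrow>
     admissible m P q r s \<gamma> \<and> (\<forall>j<m. LH (P j)) \<and> LH q"

definition weight :: "('a::euclidean_space \<Rightarrow> real) \<Rightarrow> bool" where
  "weight w \<longleftrightarrow> w \<in> borel_measurable lebesgue \<and> (AE x in lebesgue. 0 < w x)"

definition Aconst ::
  "nat \<Rightarrow> (nat \<Rightarrow> 'a::euclidean_space \<Rightarrow> real) \<Rightarrow> ('a \<Rightarrow> real) \<Rightarrow> (nat \<Rightarrow> real) \<Rightarrow> ereal \<Rightarrow> real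
     \<Rightarrow> (nat \<Rightarrow> 'a \<Rightarrow> real) \<Rightarrow> ennreal"
  where
  "Aconst m P q r s \<gamma> w =
     (SUP Q \<in> {Q. cube Q}.
        ennreal (measure lebesgue Q powr (\<gamma> - (1 / rvec m r - inv_ext s)))
        * lux (\<lambda>x. 1 / (1 / q x - inv_ext s)) (\<lambda>x. indicator Q x * (\<Prod>j<m. w j x))
        * (\<Prod>j<m. lux (\<lambda>x. 1 / (1 / r j - 1 / P j x)) (\<lambda>x. indicator Q x / w j x)))"

definition in_Aclass ::
  "nat \<Rightarrow> (nat \<Rightarrow> 'a::euclidean_space \<Rightarrow> real) \<Rightarrow> ('a \<Rightarrow> real) \<Rightarrow> (nat \<Rightarrow> real) \<Rightarrow> ereal \<Rightarrow> real
     \<Rightarrow> (nat \<Rightarrow> 'a \<Rightarrow> real) \<Rightarrow> bool"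
  where
  "in_Aclass m P q r s \<gamma> w \<longleftrightarrow> (\<forall>j<m. weight (w j)) \<and> Aconst m P q r s \<gamma> w < top"

end

theory Submission
  imports Defs
begin

lemma lux_zero_AE:
  fixes p f :: "'a::euclidean_space \<Rightarrow> real"
  assumes pm: "p \<in> borel_measurable lebesgue" and fm: "f \<in> borel_measurable lebesgue"
    and z: "lux p f = 0"
  shows "AE x in lebesgue. 0 < p x \<longrightarrow> f x = 0"
proof -
  define E where "E n = {x. 1/(real n+1) \<le> \<bar>f x\<bar> \<and> 1/(real n+1) \<le> p x}" for n
  have Em: "E n \<in> sets lebesgue" for n
  proof -
    have "{x\<in>space lebesgue. 1/(real n+1) \<le> \<bar>f x\<bar> \<and> 1/(real n+1) \<le> p x} \<in> sets lebesgue"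
      using pm fm by measurable
    thus ?thesis unfolding E_def by simp
  qed
  have Enull: "E n \<in> null_sets lebesgue" for n
  proof (rule ccontr)
    assume nn: "E n \<notin> null_sets lebesgue"
    define \<epsilon> where "\<epsilon> = 1/(real n+1)"
    have ep: "0 < \<epsilon>" unfolding \<epsilon>_def by simp
    have "emeasure lebesgue (E n) \<noteq> 0" using nn Em by (simp add: null_sets_def)
    hence mpos: "0 < emeasure lebesgue (E n)" by (simp add: zero_less_iff_neq_zero)
    define mr where "mr = enn2real (min (emeasure lebesgue (E n)) 1)"
    have mrpos: "0 < mr" unfolding mr_def using mpos
      by (cases "emeasure lebesgue (E n) < 1")
         (auto simp: min_def enn2real_positive_iff dest: order.strict_trans[OF _ ennreal_one_less_top])
    have mrle: "ennreal mr \<le> emeasure lebesgue (E n)"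
      unfolding mr_def by (cases "emeasure lebesgue (E n) \<le> 1") (auto simp: min_def ennreal_enn2real_if)
    define t where "t = max 2 ((2/mr) powr (1/\<epsilon>))"
    have t1: "1 < t" unfolding t_def by simp
    have tp: "2/mr \<le> t powr \<epsilon>"
    proof -
      have "(2/mr) = ((2/mr) powr (1/\<epsilon>)) powr \<epsilon>" using ep mrpos by (simp add: powr_powr)
      also have "\<dots> \<le> t powr \<epsilon>" unfolding t_def using ep by (intro powr_mono2) auto
      finally show ?thesis .
    qed
    define l where "l = \<epsilon> / t"
    have lpos: "0 < l" unfolding l_def using ep t1 by simp
    have "lux p f < ennreal l" using z lpos by simp
    then obtain l' where l'S: "ennreal l' \<in> {ennreal l | l. 0 < l \<and>
       (\<integral>\<^sup>+ x. ennreal (\<bar>f x / l\<bar> powr p x) \<partial>lebesgue) \<le> 1}" and l'l: "ennreal l' < ennreal l"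
      unfolding lux_def by (auto simp: Inf_less_iff)
    from l'S obtain l'' where l'': "ennreal l' = ennreal l''" "0 < l''"
      "(\<integral>\<^sup>+ x. ennreal (\<bar>f x / l''\<bar> powr p x) \<partial>lebesgue) \<le> 1" by auto
    have "l'' < l" using l'' l'l lpos by (metis ennreal_less_iff less_le)
    have pt: "ennreal (t powr \<epsilon>) * indicator (E n) x \<le> ennreal (\<bar>f x / l''\<bar> powr p x)" for x
    proof (cases "x \<in> E n")
      case True
      hence fx: "\<epsilon> \<le> \<bar>f x\<bar>" "\<epsilon> \<le> p x" unfolding E_def \<epsilon>_def by auto
      have "t = \<epsilon> / l" unfolding l_def using ep t1 by simp
      also have "\<dots> \<le> \<bar>f x\<bar> / l''" using fx \<open>l'' < l\<close> l'' ep
        by (meson frac_le less_imp_le order.trans)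
      finally have tf: "t \<le> \<bar>f x / l''\<bar>" using l'' by simp
      have "t powr \<epsilon> \<le> t powr p x" using t1 fx by (intro powr_mono) auto
      also have "\<dots> \<le> \<bar>f x / l''\<bar> powr p x" using tf t1 fx ep by (intro powr_mono2) auto
      finally show ?thesis using True by simp
    qed simp
    have "ennreal (t powr \<epsilon>) * emeasure lebesgue (E n) =
        (\<integral>\<^sup>+ x. ennreal (t powr \<epsilon>) * indicator (E n) x \<partial>lebesgue)"
      using Em by (simp add: nn_integral_cmult_indicator)
    also have "\<dots> \<le> (\<integral>\<^sup>+ x. ennreal (\<bar>f x / l''\<bar> powr p x) \<partial>lebesgue)"
      by (intro nn_integral_mono pt)
    also have "\<dots> \<le> 1" by (rule l''(3))
    finally have A: "ennreal (t powr \<epsilon>) * emeasure lebesgue (E n) \<le> 1" .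
    have "ennreal (t powr \<epsilon>) * ennreal mr \<le> ennreal (t powr \<epsilon>) * emeasure lebesgue (E n)"
      by (intro mult_left_mono mrle) auto
    hence "ennreal (t powr \<epsilon> * mr) \<le> 1" using A mrpos by (simp add: ennreal_mult)
    hence "t powr \<epsilon> * mr \<le> 1" by (simp add: ennreal_le_1)
    moreover have "2 \<le> t powr \<epsilon> * mr" using tp mrpos by (simp add: field_simps)
    ultimately show False by simp
  qed
  have "(\<Union>n. E n) \<in> null_sets lebesgue" using Enull by blast
  then show ?thesis
  proof (rule AE_I')
    show "{x \<in> space lebesgue. \<not> (0 < p x \<longrightarrow> f x = 0)} \<subseteq> (\<Union>n. E n)"
    proof
      fix x assume "x \<in> {x \<in> space lebesgue. \<not> (0 < p x \<longrightarrow> f x = 0)}"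
      hence h: "0 < min \<bar>f x\<bar> (p x)" by auto
      obtain n where "1 / (real n + 1) < min \<bar>f x\<bar> (p x)"
        using h by (rule nat_approx_posE) (simp add: add.commute)
      thus "x \<in> (\<Union>n. E n)" unfolding E_def by (auto intro!: exI[of _ n])
    qed
  qed
qed

lemma holder_pw:
  fixes \<theta> c pt p0 p1 g f0 f1 l0 l1 K :: real
  assumes th: "0 < \<theta>" "\<theta> < 1" and c: "0 < c" "c \<le> pt" and p: "0 < p0" "0 < p1"
    and h: "1/pt = (1-\<theta>)/p0 + \<theta>/p1"
    and g: "\<bar>g\<bar> \<le> \<bar>f0\<bar> powr (1-\<theta>) * \<bar>f1\<bar> powr \<theta>"
    and l: "0 < l0" "0 < l1" and K: "K = 2 powr (1/c)"
  shows "\<bar>g / (K * l0 powr (1-\<theta>) * l1 powr \<theta>)\<bar> powr pt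
     \<le> (\<bar>f0 / l0\<bar> powr p0 + \<bar>f1 / l1\<bar> powr p1) / 2"
proof (cases "f0 = 0 \<or> f1 = 0")
  case True
  hence "g = 0" using g th by auto
  thus ?thesis by simp
next
  case False
  define A0 where "A0 = \<bar>f0 / l0\<bar>"
  define A1 where "A1 = \<bar>f1 / l1\<bar>"
  have A: "0 < A0" "0 < A1" unfolding A0_def A1_def using False l by auto
  have ptpos: "0 < pt" using c by simp
  have Kpos: "0 < K" unfolding K by simp
  have K1: "1 \<le> K" unfolding K using c by (simp add: ge_one_powr_ge_zero)
  have "\<bar>f0\<bar> powr (1-\<theta>) * \<bar>f1\<bar> powr \<theta> / (l0 powr (1-\<theta>) * l1 powr \<theta>)
      = A0 powr (1-\<theta>) * A1 powr \<theta>"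
    unfolding A0_def A1_def using l by (simp add: powr_divide abs_divide)
  hence B: "\<bar>g / (K * l0 powr (1-\<theta>) * l1 powr \<theta>)\<bar> \<le> A0 powr (1-\<theta>) * A1 powr \<theta> / K"
    using g l Kpos by (simp add: abs_divide abs_mult divide_right_mono field_simps)
  have "\<bar>g / (K * l0 powr (1-\<theta>) * l1 powr \<theta>)\<bar> powr pt \<le> (A0 powr (1-\<theta>) * A1 powr \<theta> / K) powr pt"
    using B ptpos by (intro powr_mono2) auto
  also have "\<dots> = (A0 powr (1-\<theta>) * A1 powr \<theta>) powr pt / K powr pt"
    using Kpos by (simp add: powr_divide)
  also have "\<dots> \<le> (A0 powr (1-\<theta>) * A1 powr \<theta>) powr pt / 2"
  proof -
    have "K powr c = 2" unfolding K using c by (simp add: powr_powr)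
    moreover have "K powr c \<le> K powr pt" using K1 c by (intro powr_mono) auto
    ultimately show ?thesis by (intro divide_left_mono) auto
  qed
  also have "(A0 powr (1-\<theta>) * A1 powr \<theta>) powr pt
      = (A0 powr p0) powr ((1-\<theta>)*pt/p0) * (A1 powr p1) powr (\<theta>*pt/p1)"
    using A p by (simp add: powr_mult powr_powr)
  also have "\<dots> \<le> ((1-\<theta>)*pt/p0) * A0 powr p0 + (\<theta>*pt/p1) * A1 powr p1"
  proof (rule Youngs_inequality_0)
    show "(1-\<theta>)*pt/p0 + \<theta>*pt/p1 = 1"
    proof -
      have "(1-\<theta>)*pt/p0 + \<theta>*pt/p1 = pt * ((1-\<theta>)/p0 + \<theta>/p1)" by (simp add: field_simps)
      also have "\<dots> = 1" using h ptpos by (simp flip: h)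
      finally show ?thesis .
    qed
  qed (use th ptpos p A in auto)
  also have "\<dots> \<le> A0 powr p0 + A1 powr p1"
  proof -
    have s: "(1-\<theta>)*pt/p0 + \<theta>*pt/p1 = 1"
    proof -
      have "(1-\<theta>)*pt/p0 + \<theta>*pt/p1 = pt * ((1-\<theta>)/p0 + \<theta>/p1)" by (simp add: field_simps)
      also have "\<dots> = 1" using h ptpos by (simp flip: h)
      finally show ?thesis .
    qed
    have a: "0 \<le> (1-\<theta>)*pt/p0" "0 \<le> \<theta>*pt/p1" using th ptpos p by auto
    have "((1-\<theta>)*pt/p0) * A0 powr p0 \<le> 1 * A0 powr p0" using s a by (intro mult_right_mono) auto
    moreover have "(\<theta>*pt/p1) * A1 powr p1 \<le> 1 * A1 powr p1" using s a by (intro mult_right_mono) auto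
    ultimately show ?thesis by simp
  qed
  finally show ?thesis unfolding A0_def A1_def by (simp add: divide_right_mono)
qed

lemma lux_lt:
  assumes "lux p f < ennreal b"
  shows "\<exists>l>0. l < b \<and> (\<integral>\<^sup>+ x. ennreal (\<bar>f x / l\<bar> powr p x) \<partial>lebesgue) \<le> 1"
proof -
  obtain l' where l'S: "ennreal l' \<in> {ennreal l | l. 0 < l \<and>
       (\<integral>\<^sup>+ x. ennreal (\<bar>f x / l\<bar> powr p x) \<partial>lebesgue) \<le> 1}" and l'l: "ennreal l' < ennreal b"
    using assms unfolding lux_def by (auto simp: Inf_less_iff)
  from l'S obtain l'' where l'': "ennreal l' = ennreal l''" "0 < l''"
    "(\<integral>\<^sup>+ x. ennreal (\<bar>f x / l''\<bar> powr p x) \<partial>lebesgue) \<le> 1" by auto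
  have "l'' < b" using l'' l'l by (metis ennreal_less_iff less_le)
  thus ?thesis using l'' by blast
qed

lemma lux_le:
  assumes "0 < l" "(\<integral>\<^sup>+ x. ennreal (\<bar>f x / l\<bar> powr p x) \<partial>lebesgue) \<le> 1"
  shows "lux p f \<le> ennreal l"
  unfolding lux_def using assms by (intro Inf_lower) auto

lemma lux_holder:
  fixes p0 p1 pt f0 f1 g :: "'a::euclidean_space \<Rightarrow> real" and \<theta> c :: real
  assumes th: "0 < \<theta>" "\<theta> < 1" and c: "0 < c"
    and meas: "p0 \<in> borel_measurable lebesgue" "p1 \<in> borel_measurable lebesgue"
      "f0 \<in> borel_measurable lebesgue" "f1 \<in> borel_measurable lebesgue"
    and ae: "AE x in lebesgue. 0 < p0 x \<and> 0 < p1 x \<and> c \<le> pt x \<and> 1/pt x = (1-\<theta>)/p0 x + \<theta>/p1 x"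
    and aeg: "AE x in lebesgue. \<bar>g x\<bar> \<le> \<bar>f0 x\<bar> powr (1-\<theta>) * \<bar>f1 x\<bar> powr \<theta>"
    and L0: "0 < lux p0 f0" "lux p0 f0 < top" and L1: "0 < lux p1 f1" "lux p1 f1 < top"
  shows "lux pt g \<le> ennreal (2 powr (1/c) * enn2real (lux p0 f0) powr (1-\<theta>) * enn2real (lux p1 f1) powr \<theta>)"
proof -
  define K where "K = 2 powr (1/c)"
  define L0r where "L0r = enn2real (lux p0 f0)"
  define L1r where "L1r = enn2real (lux p1 f1)"
  have L0e: "lux p0 f0 = ennreal L0r" unfolding L0r_def using L0 by (simp add: less_top)
  have L1e: "lux p1 f1 = ennreal L1r" unfolding L1r_def using L1 by (simp add: less_top)
  have L0p: "0 < L0r" using L0 L0e by simp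
  have L1p: "0 < L1r" using L1 L1e by simp
  define T where "T = K * L0r powr (1-\<theta>) * L1r powr \<theta>"
  have Kpos: "0 < K" unfolding K_def by simp
  have Tpos: "0 < T" unfolding T_def using Kpos L0p L1p by simp
  have key: "lux pt g \<le> ennreal ((1+\<delta>) * T)" if dp: "0 < \<delta>" for \<delta>
  proof -
    have "lux p0 f0 < ennreal (L0r * (1+\<delta>))" using L0e L0p dp by (simp add: ennreal_less_iff)
    then obtain l0 where l0: "0 < l0" "l0 < L0r * (1+\<delta>)"
        "(\<integral>\<^sup>+ x. ennreal (\<bar>f0 x / l0\<bar> powr p0 x) \<partial>lebesgue) \<le> 1"
      using lux_lt by blast
    have "lux p1 f1 < ennreal (L1r * (1+\<delta>))" using L1e L1p dp by (simp add: ennreal_less_iff)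
    then obtain l1 where l1: "0 < l1" "l1 < L1r * (1+\<delta>)"
        "(\<integral>\<^sup>+ x. ennreal (\<bar>f1 x / l1\<bar> powr p1 x) \<partial>lebesgue) \<le> 1"
      using lux_lt by blast
    define l where "l = K * l0 powr (1-\<theta>) * l1 powr \<theta>"
    have lpos: "0 < l" unfolding l_def using Kpos l0 l1 by simp
    have pw: "AE x in lebesgue. ennreal (\<bar>g x / l\<bar> powr pt x) \<le>
        ennreal (1/2) * (ennreal (\<bar>f0 x / l0\<bar> powr p0 x) + ennreal (\<bar>f1 x / l1\<bar> powr p1 x))"
      using ae aeg
    proof eventually_elim
      case (elim x)
      have "\<bar>g x / l\<bar> powr pt x \<le> (\<bar>f0 x / l0\<bar> powr p0 x + \<bar>f1 x / l1\<bar> powr p1 x) / 2"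
        unfolding l_def using elim th c l0 l1 by (intro holder_pw[where c=c]) (auto simp: K_def)
      hence "ennreal (\<bar>g x / l\<bar> powr pt x) \<le> ennreal ((1/2) * (\<bar>f0 x / l0\<bar> powr p0 x + \<bar>f1 x / l1\<bar> powr p1 x))"
        by (intro ennreal_leI) simp
      also have "ennreal ((1/2) * (\<bar>f0 x / l0\<bar> powr p0 x + \<bar>f1 x / l1\<bar> powr p1 x))
          = ennreal (1/2) * (ennreal (\<bar>f0 x / l0\<bar> powr p0 x) + ennreal (\<bar>f1 x / l1\<bar> powr p1 x))"
        by (subst ennreal_mult) (auto intro: arg_cong2[where f="(*)"] ennreal_plus)
      finally show ?case .
    qed
    have "(\<integral>\<^sup>+ x. ennreal (\<bar>g x / l\<bar> powr pt x) \<partial>lebesgue)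
        \<le> (\<integral>\<^sup>+ x. ennreal (1/2) * (ennreal (\<bar>f0 x / l0\<bar> powr p0 x) + ennreal (\<bar>f1 x / l1\<bar> powr p1 x)) \<partial>lebesgue)"
      by (rule nn_integral_mono_AE[OF pw])
    also have "\<dots> = ennreal (1/2) * ((\<integral>\<^sup>+ x. ennreal (\<bar>f0 x / l0\<bar> powr p0 x) \<partial>lebesgue)
                 + (\<integral>\<^sup>+ x. ennreal (\<bar>f1 x / l1\<bar> powr p1 x) \<partial>lebesgue))"
      using meas by (simp add: nn_integral_cmult nn_integral_add)
    also have "\<dots> \<le> ennreal (1/2) * (1 + 1)"
      using l0 l1 by (intro mult_left_mono add_mono) auto
    also have "\<dots> = ennreal (1/2) * ennreal 2" by simp
    also have "\<dots> = ennreal ((1/2) * 2)" by (rule ennreal_mult[symmetric]) auto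
    also have "\<dots> = 1" by simp
    finally have "lux pt g \<le> ennreal l" by (intro lux_le lpos)
    also have "l \<le> K * (L0r * (1+\<delta>)) powr (1-\<theta>) * (L1r * (1+\<delta>)) powr \<theta>"
      unfolding l_def using l0 l1 th Kpos
      by (intro mult_mono mult_left_mono powr_mono2) auto
    also have "\<dots> = (1+\<delta>) * T" unfolding T_def using L0p L1p dp
      by (simp add: powr_mult powr_add[symmetric])
    finally show ?thesis by (simp add: ennreal_leI)
  qed
  have "lux pt g \<le> ennreal T"
  proof (rule ccontr)
    assume "\<not> ?thesis"
    hence lt: "ennreal T < lux pt g" by simp
    have fin: "lux pt g \<le> ennreal (2 * T)" using key[of 1] by simp
    define z where "z = enn2real (lux pt g)"
    have ze: "lux pt g = ennreal z" unfolding z_def using fin by (simp add: less_top[symmetric] ennreal_enn2real_if) (metis ennreal_less_top top.not_eq_extremum order.strict_trans1)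
    have zT: "T < z" using lt ze Tpos by (simp add: ennreal_less_iff)
    define \<delta> where "\<delta> = (z - T) / (2*T)"
    have dp: "0 < \<delta>" unfolding \<delta>_def using zT Tpos by simp
    have "z \<le> (1+\<delta>) * T" using key[OF dp] ze Tpos dp by (simp add: ennreal_le_iff)
    moreover have "(1+\<delta>) * T < z" unfolding \<delta>_def using zT Tpos by (simp add: field_simps)
    ultimately show False by simp
  qed
  thus ?thesis unfolding T_def K_def L0r_def L1r_def .
qed

lemma AE_open_all:
  fixes P :: "'a::euclidean_space \<Rightarrow> bool"
  assumes ae: "AE x in lebesgue. P x" and op: "open {x. \<not> P x}"
  shows "P x"
proof (rule ccontr)
  assume nx: "\<not> P x"
  obtain N where N0: "{x \<in> space lebesgue. \<not> P x} \<subseteq> N" "emeasure lebesgue N = 0" "N \<in> sets lebesgue"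
    using ae by (rule AE_E)
  have N: "{x. \<not> P x} \<subseteq> N" "N \<in> null_sets lebesgue" using N0 by (auto intro: null_setsI)
  have "{x. \<not> P x} \<in> null_sets lebesgue"
    using N op by (intro null_sets_subset[OF N(2)]) (auto simp: borel_open)
  hence "negligible {x. \<not> P x}" by (simp add: negligible_iff_null_sets)
  moreover have "{x. \<not> P x} \<noteq> {}" using nx by auto
  ultimately show False using open_not_negligible op by blast
qed

lemma AE_const:
  assumes "AE (x::'a::euclidean_space) in lebesgue. Q" shows Q
proof (rule ccontr)
  assume "\<not> Q"
  thus False using AE_open_all[OF assms] by simp
qed

lemma AE_leb_nontriv: "\<not> (AE x in (lebesgue :: 'a::euclidean_space measure). False)"
  using AE_open_all[of "\<lambda>x::'a. False"] by auto

lemma pminus_AE: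
  fixes p :: "'a::euclidean_space \<Rightarrow> real"
  assumes C: "AE x in lebesgue. p x \<le> C" and c0: "AE x in lebesgue. c0 \<le> p x"
  shows "AE x in lebesgue. pminus p \<le> p x"
proof -
  define S where "S = {c. AE x in lebesgue. c \<le> p x}"
  have ne: "S \<noteq> {}" using c0 unfolding S_def by auto
  have bdd: "bdd_above S"
  proof (rule bdd_aboveI)
    fix c assume "c \<in> S"
    hence "AE x in lebesgue. c \<le> p x" unfolding S_def by simp
    have "AE (x::'a) in lebesgue. c \<le> C" by (rule eventually_elim2[OF C \<open>AE x in lebesgue. c \<le> p x\<close>]) simp
    thus "c \<le> C" using AE_leb_nontriv by (cases "c \<le> C") auto
  qed
  have "\<forall>n::nat. \<exists>c\<in>S. pminus p - 1/(real n+1) < c"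
  proof
    fix n :: nat
    have "pminus p - 1/(real n+1) < Sup S" unfolding pminus_def S_def[symmetric] by simp
    thus "\<exists>c\<in>S. pminus p - 1/(real n+1) < c" using less_cSup_iff[OF ne bdd] by blast
  qed
  then obtain cn where cn: "\<And>n. cn n \<in> S" "\<And>n. pminus p - 1/(real n+1) < cn n" by metis
  have "AE x in lebesgue. \<forall>n. cn n \<le> p x" using cn(1) unfolding S_def by (simp add: AE_all_countable)
  thus ?thesis
  proof eventually_elim
    case (elim x)
    show ?case
    proof (rule ccontr)
      assume "\<not> pminus p \<le> p x"
      hence "0 < pminus p - p x" by simp
      then obtain n where "1 / real (Suc n) < pminus p - p x" by (rule nat_approx_posE)
      moreover have "pminus p - 1/(real n+1) < p x" using cn(2)[of n] elim[rule_format, of n] by simp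
      ultimately show False by (simp add: add.commute)
    qed
  qed
qed

lemma pminus_ge:
  fixes p :: "'a::euclidean_space \<Rightarrow> real"
  assumes C: "AE x in lebesgue. p x \<le> C" and "AE x in lebesgue. c \<le> p x" shows "c \<le> pminus p"
proof -
  define S where "S = {c. AE x in lebesgue. c \<le> p x}"
  have bdd: "bdd_above S"
  proof (rule bdd_aboveI)
    fix c assume "c \<in> S"
    hence "AE x in lebesgue. c \<le> p x" unfolding S_def by simp
    have "AE (x::'a) in lebesgue. c \<le> C" by (rule eventually_elim2[OF C \<open>AE x in lebesgue. c \<le> p x\<close>]) simp
    thus "c \<le> C" using AE_leb_nontriv by (cases "c \<le> C") auto
  qed
  have "c \<in> S" using assms unfolding S_def by simp
  thus ?thesis unfolding pminus_def S_def[symmetric] using bdd by (rule cSup_upper)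
qed

lemma pplus_AE:
  fixes p :: "'a::euclidean_space \<Rightarrow> real"
  assumes C: "AE x in lebesgue. p x \<le> C" and c0: "AE x in lebesgue. c0 \<le> p x"
  shows "AE x in lebesgue. p x \<le> pplus p"
proof -
  define S where "S = {C. AE x in lebesgue. p x \<le> C}"
  have ne: "S \<noteq> {}" using C unfolding S_def by auto
  have bdd: "bdd_below S"
  proof (rule bdd_belowI)
    fix c assume "c \<in> S"
    hence "AE x in lebesgue. p x \<le> c" unfolding S_def by simp
    have "AE (x::'a) in lebesgue. c0 \<le> c" by (rule eventually_elim2[OF c0 \<open>AE x in lebesgue. p x \<le> c\<close>]) simp
    thus "c0 \<le> c" using AE_leb_nontriv by (cases "c0 \<le> c") auto
  qed
  have "\<forall>n::nat. \<exists>c\<in>S. c < pplus p + 1/(real n+1)"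
  proof
    fix n :: nat
    have "Inf S < pplus p + 1/(real n+1)" unfolding pplus_def S_def[symmetric] by simp
    thus "\<exists>c\<in>S. c < pplus p + 1/(real n+1)" using cInf_less_iff[OF ne bdd] by blast
  qed
  then obtain cn where cn: "\<And>n. cn n \<in> S" "\<And>n. cn n < pplus p + 1/(real n+1)" by metis
  have "AE x in lebesgue. \<forall>n. p x \<le> cn n" using cn(1) unfolding S_def by (simp add: AE_all_countable)
  thus ?thesis
  proof eventually_elim
    case (elim x)
    show ?case
    proof (rule ccontr)
      assume "\<not> p x \<le> pplus p"
      hence "0 < p x - pplus p" by simp
      then obtain n where "1 / real (Suc n) < p x - pplus p" by (rule nat_approx_posE)
      moreover have "p x < pplus p + 1/(real n+1)" using cn(2)[of n] elim[rule_format, of n] by simp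
      ultimately show False by (simp add: add.commute)
    qed
  qed
qed

lemma pplus_le:
  fixes p :: "'a::euclidean_space \<Rightarrow> real"
  assumes c0: "AE x in lebesgue. c0 \<le> p x" and "AE x in lebesgue. p x \<le> C" shows "pplus p \<le> C"
proof -
  define S where "S = {C. AE x in lebesgue. p x \<le> C}"
  have bdd: "bdd_below S"
  proof (rule bdd_belowI)
    fix c assume "c \<in> S"
    hence "AE x in lebesgue. p x \<le> c" unfolding S_def by simp
    have "AE (x::'a) in lebesgue. c0 \<le> c" by (rule eventually_elim2[OF c0 \<open>AE x in lebesgue. p x \<le> c\<close>]) simp
    thus "c0 \<le> c" using AE_leb_nontriv by (cases "c0 \<le> c") auto
  qed
  have "C \<in> S" using assms unfolding S_def by simp
  thus ?thesis unfolding pplus_def S_def[symmetric] using bdd by (rule cInf_lower)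
qed

lemma LH0_cont:
  fixes p :: "'a::euclidean_space \<Rightarrow> real"
  assumes "LH0 p" shows "continuous_on UNIV p"
proof -
  obtain C0 where C0: "\<And>x y. 0 < dist x y \<Longrightarrow> dist x y < 1/2 \<Longrightarrow> \<bar>p x - p y\<bar> \<le> C0 / (- ln (dist x y))"
    using assms unfolding LH0_def by blast
  define D where "D = max C0 0 + 1"
  have Dp: "0 < D" unfolding D_def by simp
  show ?thesis unfolding continuous_on_iff
  proof (intro ballI allI impI)
    fix x :: 'a and e :: real assume "x \<in> UNIV" "0 < e"
    define d where "d = min (1/2) (exp (- D / e))"
    have dp: "0 < d" unfolding d_def by simp
    have "\<forall>y. dist y x < d \<longrightarrow> dist (p y) (p x) < e"
    proof (intro allI impI)
      fix y assume dy: "dist y x < d"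
      show "dist (p y) (p x) < e"
      proof (cases "y = x")
        case True thus ?thesis using \<open>0 < e\<close> by simp
      next
        case False
        hence d0: "0 < dist y x" by simp
        have d2: "dist y x < 1/2" using dy unfolding d_def by simp
        have "dist y x < exp (- D / e)" using dy unfolding d_def by simp
        hence "ln (dist y x) < - D / e" using ln_less_cancel_iff[of "dist y x" "exp (- D / e)"] d0 by simp
        hence L: "D / e < - ln (dist y x)" by simp
        have lnp: "0 < - ln (dist y x)" using d0 d2 by simp
        have "\<bar>p y - p x\<bar> \<le> C0 / (- ln (dist y x))" using C0 d0 d2 by blast
        also have "\<dots> \<le> D / (- ln (dist y x))" using lnp unfolding D_def by (intro divide_right_mono) auto
        also have "\<dots> < e" using L lnp \<open>0 < e\<close> Dp by (simp add: field_simps)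
        finally show ?thesis by (simp add: dist_real_def)
      qed
    qed
    thus "\<exists>d>0. \<forall>y\<in>UNIV. dist y x < d \<longrightarrow> dist (p y) (p x) < e" using dp by blast
  qed
qed

lemma AE_ge_all:
  fixes p :: "'a::euclidean_space \<Rightarrow> real"
  assumes "continuous_on UNIV p" "AE x in lebesgue. c \<le> p x" shows "c \<le> p x"
proof (rule AE_open_all[OF assms(2)])
  have "open {x. p x < c}" using assms(1) by (intro open_Collect_less) (auto intro: continuous_intros)
  thus "open {x. \<not> c \<le> p x}" by (simp add: not_le)
qed

lemma AE_le_all:
  fixes p :: "'a::euclidean_space \<Rightarrow> real"
  assumes "continuous_on UNIV p" "AE x in lebesgue. p x \<le> c" shows "p x \<le> c"
proof (rule AE_open_all[OF assms(2)])
  have "open {x. c < p x}" using assms(1) by (intro open_Collect_less) (auto intro: continuous_intros)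
  thus "open {x. \<not> p x \<le> c}" by (simp add: not_le)
qed

definition H :: "real \<Rightarrow> real \<Rightarrow> real \<Rightarrow> real" where
  "H \<theta> a b = 1 / ((1 - \<theta>) / a + \<theta> / b)"

lemma H_mono:
  assumes th: "0 < \<theta>" "\<theta> < 1" and "0 < a" "a \<le> a'" "0 < b" "b \<le> b'"
  shows "H \<theta> a b \<le> H \<theta> a' b'"
proof -
  have "(1-\<theta>)/a' \<le> (1-\<theta>)/a" using assms by (intro divide_left_mono) auto
  moreover have "\<theta>/b' \<le> \<theta>/b" using assms by (intro divide_left_mono) auto
  moreover have "0 < (1-\<theta>)/a' + \<theta>/b'" using assms by (intro add_pos_pos) auto
  ultimately show ?thesis unfolding H_def by (intro divide_left_mono) auto
qed

lemma H_pos: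
  assumes th: "0 < \<theta>" "\<theta> < 1" and "0 < a" "0 < b" shows "0 < H \<theta> a b"
  using assms unfolding H_def by (intro divide_pos_pos add_pos_pos) auto

lemma H_gt:
  assumes th: "0 < \<theta>" "\<theta> < 1" and "0 < r" "r < a" "r < b" shows "r < H \<theta> a b"
proof -
  have "(1-\<theta>)/a < (1-\<theta>)/r" using assms by (intro divide_strict_left_mono) auto
  moreover have "\<theta>/b < \<theta>/r" using assms by (intro divide_strict_left_mono) auto
  moreover have e: "(1-\<theta>)/r + \<theta>/r = 1/r" by (metis add_divide_distrib diff_add_cancel)
  ultimately have "(1-\<theta>)/a + \<theta>/b < 1/r" by linarith
  moreover have "0 < (1-\<theta>)/a + \<theta>/b" using assms by (intro add_pos_pos) auto
  ultimately have u: "(1-\<theta>)/a + \<theta>/b < 1/r" "0 < (1-\<theta>)/a + \<theta>/b" by auto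
  have "r * ((1-\<theta>)/a + \<theta>/b) < r * (1/r)" using u assms by (intro mult_strict_left_mono) auto
  hence "r * ((1-\<theta>)/a + \<theta>/b) < 1" using assms by simp
  thus ?thesis unfolding H_def using u by (simp add: field_simps)
qed

lemma H_lt:
  assumes th: "0 < \<theta>" "\<theta> < 1" and "0 < a" "0 < b" "a < s" "b < s" shows "H \<theta> a b < s"
proof -
  have "(1-\<theta>)/s < (1-\<theta>)/a" using assms by (intro divide_strict_left_mono) auto
  moreover have "\<theta>/s < \<theta>/b" using assms by (intro divide_strict_left_mono) auto
  moreover have e: "(1-\<theta>)/s + \<theta>/s = 1/s" by (metis add_divide_distrib diff_add_cancel)
  ultimately have "1/s < (1-\<theta>)/a + \<theta>/b" by linarith
  moreover have "0 < s" using assms by simp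
  ultimately have u: "1/s < (1-\<theta>)/a + \<theta>/b" "0 < s" by auto
  have "s * (1/s) < s * ((1-\<theta>)/a + \<theta>/b)" using u by (intro mult_strict_left_mono) auto
  hence "1 < s * ((1-\<theta>)/a + \<theta>/b)" using u by simp
  moreover have "0 < (1-\<theta>)/a + \<theta>/b" using assms by (intro add_pos_pos) auto
  ultimately show ?thesis unfolding H_def by (simp add: field_simps)
qed

lemma inv_diff:
  fixes x y :: real assumes "0 < x" "0 < y"
  shows "\<bar>1/x - 1/y\<bar> = \<bar>x - y\<bar> / (x*y)"
proof -
  have "1/x - 1/y = (y - x)/(x*y)" using assms by (simp add: field_simps)
  hence "\<bar>1/x - 1/y\<bar> = \<bar>y - x\<bar>/(x*y)" using assms by (simp add: abs_divide)
  thus ?thesis by (simp add: abs_minus_commute)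
qed

lemma H_diff:
  assumes th: "0 < \<theta>" "\<theta> < 1" and c: "0 < c"
    and b: "c \<le> a" "a \<le> C" "c \<le> a'" "a' \<le> C" "c \<le> b" "b \<le> C" "c \<le> b'" "b' \<le> C"
  shows "\<bar>H \<theta> a b - H \<theta> a' b'\<bar> \<le> (C^2 / c^2) * (\<bar>a - a'\<bar> + \<bar>b - b'\<bar>)"
proof -
  define u where "u = (1 - \<theta>) / a + \<theta> / b"
  define u' where "u' = (1 - \<theta>) / a' + \<theta> / b'"
  have Cp: "0 < C" using b c by simp
  have ai: "1/C \<le> 1/a" "1/C \<le> 1/b" "1/C \<le> 1/a'" "1/C \<le> 1/b'" using b c by (auto intro: divide_left_mono)
  have "1/C = ((1-\<theta>) + \<theta>) * (1/C)" by simp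
  also have "\<dots> = (1-\<theta>) * (1/C) + \<theta> * (1/C)" by (rule distrib_right)
  also have "\<dots> \<le> (1-\<theta>) * (1/a) + \<theta> * (1/b)" using ai th by (intro add_mono mult_left_mono) auto
  finally have uC: "1/C \<le> u" unfolding u_def by simp
  have "1/C = ((1-\<theta>) + \<theta>) * (1/C)" by simp
  also have "\<dots> = (1-\<theta>) * (1/C) + \<theta> * (1/C)" by (rule distrib_right)
  also have "\<dots> \<le> (1-\<theta>) * (1/a') + \<theta> * (1/b')" using ai th by (intro add_mono mult_left_mono) auto
  finally have uC': "1/C \<le> u'" unfolding u'_def by simp
  have up: "0 < u" "0 < u'" using uC uC' Cp by (auto intro: less_le_trans[of 0 "1/C"])
  have inv: "\<bar>1/x - 1/y\<bar> \<le> \<bar>x - y\<bar> / c^2" if "c \<le> x" "c \<le> y" for x y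
  proof -
    have xy: "0 < x" "0 < y" using that c by auto
    have "\<bar>1/x - 1/y\<bar> = \<bar>x - y\<bar> / (x*y)" using xy by (rule inv_diff)
    also have "\<dots> \<le> \<bar>x - y\<bar> / c^2" using that c xy
      by (intro divide_left_mono) (auto simp: power2_eq_square intro: mult_mono)
    finally show ?thesis .
  qed
  have "\<bar>u - u'\<bar> = \<bar>(1-\<theta>) * (1/a - 1/a') + \<theta> * (1/b - 1/b')\<bar>" unfolding u_def u'_def by (simp add: algebra_simps)
  also have "\<dots> \<le> (1-\<theta>) * \<bar>1/a - 1/a'\<bar> + \<theta> * \<bar>1/b - 1/b'\<bar>" using th
    by (intro order.trans[OF abs_triangle_ineq]) (simp add: abs_mult)
  also have "\<dots> \<le> 1 * (\<bar>a - a'\<bar> / c^2) + 1 * (\<bar>b - b'\<bar> / c^2)"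
    using th inv[of a a'] inv[of b b'] b by (intro add_mono mult_mono) auto
  finally have uu: "\<bar>u - u'\<bar> \<le> (\<bar>a - a'\<bar> + \<bar>b - b'\<bar>) / c^2" by (simp add: add_divide_distrib)
  have "\<bar>H \<theta> a b - H \<theta> a' b'\<bar> = \<bar>u - u'\<bar> / (u * u')" unfolding H_def u_def[symmetric] u'_def[symmetric]
    using up by (subst inv_diff) auto
  also have "\<dots> \<le> \<bar>u - u'\<bar> * C^2"
  proof -
    have "1/C * (1/C) \<le> u * u'" using uC uC' Cp up by (intro mult_mono) auto
    hence "1 / (u * u') \<le> C^2" using up Cp by (simp add: field_simps power2_eq_square)
    thus ?thesis using up by (simp add: divide_inverse mult_left_mono)
  qed
  also have "\<dots> \<le> (\<bar>a - a'\<bar> + \<bar>b - b'\<bar>) / c^2 * C^2" using uu by (intro mult_right_mono) auto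
  finally show ?thesis by (simp add: field_simps)
qed

lemma LH_harm:
  fixes p0 p1 :: "'a::euclidean_space \<Rightarrow> real"
  assumes th: "0 < \<theta>" "\<theta> < 1" and c: "0 < c" and LH: "LH p0" "LH p1"
    and b: "\<And>x. c \<le> p0 x" "\<And>x. p0 x \<le> C" "\<And>x. c \<le> p1 x" "\<And>x. p1 x \<le> C"
  shows "LH (\<lambda>x. H \<theta> (p0 x) (p1 x))"
proof -
  define K where "K = C^2 / c^2"
  have K0: "0 \<le> K" unfolding K_def by simp
  obtain A where A: "\<And>x y. 0 < dist x y \<and> dist x y < 1/2 \<longrightarrow> \<bar>p0 x - p0 y\<bar> \<le> A / (- ln (dist x y))"
    using LH unfolding LH_def LH0_def by blast
  obtain B where B: "\<And>x y. 0 < dist x y \<and> dist x y < 1/2 \<longrightarrow> \<bar>p1 x - p1 y\<bar> \<le> B / (- ln (dist x y))"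
    using LH unfolding LH_def LH0_def by blast
  have "LH0 (\<lambda>x. H \<theta> (p0 x) (p1 x))" unfolding LH0_def
  proof (intro exI allI impI)
    fix x y :: 'a assume d: "0 < dist x y \<and> dist x y < 1/2"
    have lp: "0 < - ln (dist x y)" using d by simp
    have "\<bar>H \<theta> (p0 x) (p1 x) - H \<theta> (p0 y) (p1 y)\<bar> \<le> K * (\<bar>p0 x - p0 y\<bar> + \<bar>p1 x - p1 y\<bar>)"
      unfolding K_def using th c b(1-4)[of x] b(1-4)[of y] by (intro H_diff) auto
    also have "\<dots> \<le> K * (max A 0 / (- ln (dist x y)) + max B 0 / (- ln (dist x y)))"
    proof -
      have "A / (- ln (dist x y)) \<le> max A 0 / (- ln (dist x y))" using lp by (intro divide_right_mono) auto
      moreover have "B / (- ln (dist x y)) \<le> max B 0 / (- ln (dist x y))" using lp by (intro divide_right_mono) auto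
      ultimately show ?thesis using A[of x y] B[of x y] d K0 by (intro mult_left_mono add_mono) auto
    qed
    also have "\<dots> = K * (max A 0 + max B 0) / (- ln (dist x y))" by (simp only: add_divide_distrib[symmetric] times_divide_eq_right)
    finally show "\<bar>H \<theta> (p0 x) (p1 x) - H \<theta> (p0 y) (p1 y)\<bar> \<le> K * (max A 0 + max B 0) / (- ln (dist x y))" .
  qed
  moreover
  obtain A' a where A': "\<And>x. \<bar>p0 x - a\<bar> \<le> A' / ln (exp 1 + norm x)"
    using LH unfolding LH_def LHinf_def by blast
  obtain B' b' where B': "\<And>x. \<bar>p1 x - b'\<bar> \<le> B' / ln (exp 1 + norm x)"
    using LH unfolding LH_def LHinf_def by blast
  define a1 where "a1 = max c (min C a)"
  define b1 where "b1 = max c (min C b')"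
  have cC: "c \<le> C" using b(1)[of 0] b(2)[of 0] by simp
  have a1: "c \<le> a1" "a1 \<le> C" unfolding a1_def using cC by auto
  have a13: "\<bar>p0 x - a1\<bar> \<le> \<bar>p0 x - a\<bar>" for x unfolding a1_def using cC b(1)[of x] b(2)[of x] by (simp add: max_def min_def abs_if)
  have b1: "c \<le> b1" "b1 \<le> C" unfolding b1_def using cC by auto
  have b13: "\<bar>p1 x - b1\<bar> \<le> \<bar>p1 x - b'\<bar>" for x unfolding b1_def using cC b(3)[of x] b(4)[of x] by (simp add: max_def min_def abs_if)
  have "LHinf (\<lambda>x. H \<theta> (p0 x) (p1 x))" unfolding LHinf_def
  proof (intro exI allI)
    fix x :: 'a
    have "1 < exp (1::real)" by simp
    hence "1 < exp 1 + norm x" using norm_ge_zero[of x] by linarith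
    hence lp: "0 < ln (exp 1 + norm x)" by simp
    have "\<bar>H \<theta> (p0 x) (p1 x) - H \<theta> a1 b1\<bar> \<le> K * (\<bar>p0 x - a1\<bar> + \<bar>p1 x - b1\<bar>)"
      unfolding K_def using th c b(1-4)[of x] a1 b1 by (intro H_diff) auto
    also have "\<dots> \<le> K * (max A' 0 / ln (exp 1 + norm x) + max B' 0 / ln (exp 1 + norm x))"
    proof -
      have "A' / ln (exp 1 + norm x) \<le> max A' 0 / ln (exp 1 + norm x)" using lp by (intro divide_right_mono) auto
      moreover have "B' / ln (exp 1 + norm x) \<le> max B' 0 / ln (exp 1 + norm x)" using lp by (intro divide_right_mono) auto
      ultimately show ?thesis using A'[of x] B'[of x] a13[of x] b13[of x] K0 by (intro mult_left_mono add_mono) auto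
    qed
    also have "\<dots> = K * (max A' 0 + max B' 0) / ln (exp 1 + norm x)" by (simp only: add_divide_distrib[symmetric] times_divide_eq_right)
    finally show "\<bar>H \<theta> (p0 x) (p1 x) - H \<theta> a1 b1\<bar> \<le> K * (max A' 0 + max B' 0) / ln (exp 1 + norm x)" .
  qed
  ultimately show ?thesis unfolding LH_def by simp
qed

lemma P0_AE:
  fixes p :: "'a::euclidean_space \<Rightarrow> real"
  assumes "Defs.P0 p"
  shows "AE x in lebesgue. pminus p \<le> p x \<and> p x \<le> pplus p" "0 < pminus p"
proof -
  obtain C where C: "AE x in lebesgue. p x \<le> C" using assms unfolding P0_def by blast
  obtain c0 where c0: "AE x in lebesgue. c0 \<le> p x" using assms unfolding P0_def by blast
  show "AE x in lebesgue. pminus p \<le> p x \<and> p x \<le> pplus p"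
    using pminus_AE[OF C c0] pplus_AE[OF C c0] by eventually_elim simp
  show "0 < pminus p" using assms unfolding P0_def by simp
qed

lemma P0_LH_bounds:
  fixes p :: "'a::euclidean_space \<Rightarrow> real"
  assumes "Defs.P0 p" "LH p"
  shows "pminus p \<le> p x" "p x \<le> pplus p"
proof -
  have cont: "continuous_on UNIV p" using assms(2) unfolding LH_def by (intro LH0_cont) simp
  have ae: "AE x in lebesgue. pminus p \<le> p x \<and> p x \<le> pplus p" using P0_AE[OF assms(1)] by simp
  show "pminus p \<le> p x" by (rule AE_ge_all[OF cont]) (use ae in eventually_elim, simp)
  show "p x \<le> pplus p" by (rule AE_le_all[OF cont]) (use ae in eventually_elim, simp)
qed

lemma harm_props:
  fixes p0 p1 :: "'a::euclidean_space \<Rightarrow> real"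
  assumes th: "0 < \<theta>" "\<theta> < 1" and P: "Defs.P0 p0" "Defs.P0 p1"
  shows "Defs.P0 (\<lambda>x. H \<theta> (p0 x) (p1 x))"
    and "H \<theta> (pminus p0) (pminus p1) \<le> pminus (\<lambda>x. H \<theta> (p0 x) (p1 x))"
    and "pplus (\<lambda>x. H \<theta> (p0 x) (p1 x)) \<le> H \<theta> (pplus p0) (pplus p1)"
proof -
  define h where "h = (\<lambda>x. H \<theta> (p0 x) (p1 x))"
  have a0: "AE x in lebesgue. pminus p0 \<le> p0 x \<and> p0 x \<le> pplus p0" "0 < pminus p0" using P0_AE[OF P(1)] by auto
  have a1: "AE x in lebesgue. pminus p1 \<le> p1 x \<and> p1 x \<le> pplus p1" "0 < pminus p1" using P0_AE[OF P(2)] by auto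
  have hb: "AE x in lebesgue. H \<theta> (pminus p0) (pminus p1) \<le> h x \<and> h x \<le> H \<theta> (pplus p0) (pplus p1)"
    using a0(1) a1(1)
  proof eventually_elim
    case (elim x)
    show ?case unfolding h_def using elim a0(2) a1(2) th
      by (intro conjI H_mono) auto
  qed
  have hlo: "AE x in lebesgue. H \<theta> (pminus p0) (pminus p1) \<le> h x" using hb by eventually_elim simp
  have hhi: "AE x in lebesgue. h x \<le> H \<theta> (pplus p0) (pplus p1)" using hb by eventually_elim simp
  have Hp: "0 < H \<theta> (pminus p0) (pminus p1)" using H_pos th a0(2) a1(2) by blast
  have meas: "h \<in> borel_measurable lebesgue"
  proof -
    have "p0 \<in> borel_measurable lebesgue" "p1 \<in> borel_measurable lebesgue" using P unfolding P0_def by auto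
    thus ?thesis unfolding h_def H_def by measurable
  qed
  have pm: "H \<theta> (pminus p0) (pminus p1) \<le> pminus h" by (rule pminus_ge[OF hhi hlo])
  have pp: "pplus h \<le> H \<theta> (pplus p0) (pplus p1)" by (rule pplus_le[OF hlo hhi])
  have "AE x in lebesgue. pminus h \<le> h x \<and> h x \<le> pplus h"
    using pminus_AE[OF hhi hlo] pplus_AE[OF hhi hlo] by eventually_elim simp
  hence "AE (x::'a) in lebesgue. pminus h \<le> pplus h" by eventually_elim simp
  hence "pminus h \<le> pplus h" by (rule AE_const)
  hence "Defs.P0 h" unfolding P0_def using meas hlo hhi Hp pm by auto
  thus "Defs.P0 (\<lambda>x. H \<theta> (p0 x) (p1 x))" unfolding h_def .
  show "H \<theta> (pminus p0) (pminus p1) \<le> pminus (\<lambda>x. H \<theta> (p0 x) (p1 x))" using pm unfolding h_def .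
  show "pplus (\<lambda>x. H \<theta> (p0 x) (p1 x)) \<le> H \<theta> (pplus p0) (pplus p1)" using pp unfolding h_def .
qed

lemma inv_pvec: "1 / pvec m P x = (\<Sum>j<m. 1 / P j x)"
  unfolding pvec_def by simp

lemma part1:
  fixes Pa Pb :: "nat \<Rightarrow> 'a::euclidean_space \<Rightarrow> real" and qa qb :: "'a \<Rightarrow> real"
  assumes adm0: "proper_admissible m Pa qa r s \<gamma>"
    and adm1: "proper_admissible m Pb qb r s \<gamma>"
    and th: "0 < \<theta>" "\<theta> < 1"
  shows "proper_admissible m (\<lambda>j x. H \<theta> (Pa j x) (Pb j x)) (\<lambda>x. H \<theta> (qa x) (qb x)) r s \<gamma>"
proof -
  note A0 = adm0[unfolded proper_admissible_def admissible_def]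
  note A1 = adm1[unfolded proper_admissible_def admissible_def]
  have Pj: "Defs.P0 (\<lambda>x. H \<theta> (Pa j x) (Pb j x)) \<and> r j < pminus (\<lambda>x. H \<theta> (Pa j x) (Pb j x))" if j: "j < m" for j
  proof
    have P: "Defs.P0 (Pa j)" "Defs.P0 (Pb j)" using A0 A1 j by auto
    show "Defs.P0 (\<lambda>x. H \<theta> (Pa j x) (Pb j x))" using harm_props(1)[OF th P] .
    have "r j < H \<theta> (pminus (Pa j)) (pminus (Pb j))" using A0 A1 j th by (intro H_gt) auto
    also have "\<dots> \<le> pminus (\<lambda>x. H \<theta> (Pa j x) (Pb j x))" using harm_props(2)[OF th P] .
    finally show "r j < pminus (\<lambda>x. H \<theta> (Pa j x) (Pb j x))" .
  qed
  have Pq: "Defs.P0 qa" "Defs.P0 qb" using A0 A1 by auto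
  have Q: "Defs.P0 (\<lambda>x. H \<theta> (qa x) (qb x))" using harm_props(1)[OF th Pq] .
  have ppos: "0 < pplus qa" "0 < pplus qb" using Pq unfolding P0_def by auto
  have qs: "ereal (pplus (\<lambda>x. H \<theta> (qa x) (qb x))) < s"
  proof (cases s)
    case (real sr)
    have "pplus qa < sr" "pplus qb < sr" using A0 A1 real by auto
    hence "H \<theta> (pplus qa) (pplus qb) < sr" using th ppos by (intro H_lt) auto
    with harm_props(3)[OF th Pq] show ?thesis using real by simp
  next
    case PInf thus ?thesis by simp
  next
    case MInf thus ?thesis using A0 by simp
  qed
  have ae: "AE x in lebesgue. 1 / pvec m (\<lambda>j x. H \<theta> (Pa j x) (Pb j x)) x - 1 / H \<theta> (qa x) (qb x) = \<gamma>"
  proof -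
    have e0: "AE x in lebesgue. 1 / pvec m Pa x - 1 / qa x = \<gamma>" using A0 by blast
    have e1: "AE x in lebesgue. 1 / pvec m Pb x - 1 / qb x = \<gamma>" using A1 by blast
    show ?thesis using e0 e1
  proof eventually_elim
    case (elim x)
    have "1 / pvec m (\<lambda>j x. H \<theta> (Pa j x) (Pb j x)) x - 1 / H \<theta> (qa x) (qb x)
       = (\<Sum>j<m. (1-\<theta>) * (1 / Pa j x) + \<theta> * (1 / Pb j x)) - ((1-\<theta>) * (1 / qa x) + \<theta> * (1 / qb x))"
      unfolding inv_pvec H_def by simp
    also have "\<dots> = (1-\<theta>) * ((\<Sum>j<m. 1 / Pa j x) - 1 / qa x) + \<theta> * ((\<Sum>j<m. 1 / Pb j x) - 1 / qb x)"
      by (simp add: sum.distrib sum_distrib_left algebra_simps)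
    also have "\<dots> = \<gamma>" using elim unfolding inv_pvec by (simp add: algebra_simps)
    finally show ?case .
  qed
  qed
  have LHj: "LH (\<lambda>x. H \<theta> (Pa j x) (Pb j x))" if j: "j < m" for j
  proof -
    have P: "Defs.P0 (Pa j)" "Defs.P0 (Pb j)" "LH (Pa j)" "LH (Pb j)" using A0 A1 j by auto
    show ?thesis
    proof (rule LH_harm[OF th _ P(3,4)])
      show "0 < min (pminus (Pa j)) (pminus (Pb j))" using P unfolding P0_def by auto
      fix x
      show "min (pminus (Pa j)) (pminus (Pb j)) \<le> Pa j x" "Pa j x \<le> max (pplus (Pa j)) (pplus (Pb j))"
           "min (pminus (Pa j)) (pminus (Pb j)) \<le> Pb j x" "Pb j x \<le> max (pplus (Pa j)) (pplus (Pb j))"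
        using P0_LH_bounds[OF P(1,3), of x] P0_LH_bounds[OF P(2,4), of x] by auto
    qed
  qed
  have LHq: "LH (\<lambda>x. H \<theta> (qa x) (qb x))"
  proof -
    have P: "Defs.P0 qa" "Defs.P0 qb" "LH qa" "LH qb" using A0 A1 by auto
    show ?thesis
    proof (rule LH_harm[OF th _ P(3,4)])
      show "0 < min (pminus qa) (pminus qb)" using P unfolding P0_def by auto
      fix x
      show "min (pminus qa) (pminus qb) \<le> qa x" "qa x \<le> max (pplus qa) (pplus qb)"
           "min (pminus qa) (pminus qb) \<le> qb x" "qb x \<le> max (pplus qa) (pplus qb)"
        using P0_LH_bounds[OF P(1,3), of x] P0_LH_bounds[OF P(2,4), of x] by auto
    qed
  qed
  show ?thesis unfolding proper_admissible_def admissible_def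
    using A0 Pj Q qs ae LHj LHq by auto
qed

lemma cube_not_AE:
  fixes Q :: "'a::euclidean_space set"
  assumes "cube Q" shows "\<not> (AE x in lebesgue. x \<notin> Q)"
proof
  assume ae: "AE x in lebesgue. x \<notin> Q"
  obtain a l where al: "0 < l" "Q = cbox a (a + l *\<^sub>R One)" using assms unfolding cube_def by blast
  have "box a (a + l *\<^sub>R One) \<subseteq> Q" using al box_subset_cbox by blast
  hence ae2: "AE x in lebesgue. x \<notin> box a (a + l *\<^sub>R One)" using ae by (auto elim: eventually_mono)
  have ne: "box a (a + l *\<^sub>R One) \<noteq> {}" using al by (simp add: box_ne_empty inner_add_left)
  then obtain y where y: "y \<in> box a (a + l *\<^sub>R One)" by blast
  have "y \<notin> box a (a + l *\<^sub>R One)"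
    by (rule AE_open_all[OF ae2]) (simp add: open_box)
  thus False using y by simp
qed

lemma prod_powr_pos:
  fixes u v :: "nat \<Rightarrow> real"
  shows "(\<Prod>j<m. u j powr (1-\<theta>) * v j powr \<theta>) = (\<Prod>j<m. u j) powr (1-\<theta>) * (\<Prod>j<m. v j) powr \<theta>"
  by (simp add: prod.distrib prod_powr_distrib)

lemma ind_prod_eq:
  fixes u v :: "nat \<Rightarrow> real"
  assumes "0 < \<theta>" "\<theta> < 1" "\<forall>j<m. 0 < u j" "\<forall>j<m. 0 < v j"
  shows "\<bar>indicator Q x * (\<Prod>j<m. u j powr (1-\<theta>) * v j powr \<theta>)\<bar>
     \<le> \<bar>indicator Q x * (\<Prod>j<m. u j)\<bar> powr (1-\<theta>) * \<bar>indicator Q x * (\<Prod>j<m. v j)\<bar> powr \<theta>"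
proof (cases "x \<in> Q")
  case True
  have "(\<Prod>j<m. u j) > 0" "(\<Prod>j<m. v j) > 0" using assms by (auto intro: prod_pos)
  thus ?thesis using True by (simp add: prod_powr_pos)
next
  case False thus ?thesis using assms by simp
qed

lemma ind_div_eq:
  fixes u v :: real
  assumes "0 < \<theta>" "\<theta> < 1" "0 < u" "0 < v"
  shows "\<bar>indicator Q x / (u powr (1-\<theta>) * v powr \<theta>)\<bar>
     \<le> \<bar>indicator Q x / u\<bar> powr (1-\<theta>) * \<bar>indicator Q x / v\<bar> powr \<theta>"
proof (cases "x \<in> Q")
  case True
  thus ?thesis using assms by (simp add: powr_divide)
next
  case False thus ?thesis using assms by simp
qed

lemma AE_weights:
  fixes w :: "nat \<Rightarrow> 'a::euclidean_space \<Rightarrow> real" and m :: nat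
  assumes "\<forall>j<m. weight (w j)"
  shows "AE x in lebesgue. \<forall>j<m. 0 < w j x"
proof -
  have "\<forall>j\<in>{..<m}. AE x in lebesgue. 0 < w j x" using assms unfolding weight_def by auto
  hence "AE x in lebesgue. \<forall>j\<in>{..<m}. 0 < w j x" by (intro AE_finite_allI) auto
  thus ?thesis by (auto elim: eventually_mono)
qed

lemma exp_q:
  fixes a b \<kappa> cq \<theta> :: real
  assumes th: "0 < \<theta>" "\<theta> < 1" and ab: "0 < cq" "cq \<le> a" "cq \<le> b" and k: "0 \<le> \<kappa>" "\<kappa> < 1/a" "\<kappa> < 1/b"
  shows "0 < 1/(1/a - \<kappa>)" "0 < 1/(1/b - \<kappa>)" "cq \<le> 1/(1/H \<theta> a b - \<kappa>)"
    "1/(1/(1/H \<theta> a b - \<kappa>)) = (1-\<theta>)/(1/(1/a - \<kappa>)) + \<theta>/(1/(1/b - \<kappa>))"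
proof -
  show "0 < 1/(1/a - \<kappa>)" "0 < 1/(1/b - \<kappa>)" using k by auto
  have e: "1/H \<theta> a b = (1-\<theta>)/a + \<theta>/b" unfolding H_def by simp
  show "1/(1/(1/H \<theta> a b - \<kappa>)) = (1-\<theta>)/(1/(1/a - \<kappa>)) + \<theta>/(1/(1/b - \<kappa>))"
    unfolding e by (simp add: algebra_simps)
  have ap: "0 < a" "0 < b" using ab by auto
  have dpos: "0 < (1-\<theta>)/a + \<theta>/b - \<kappa>"
  proof -
    have "(1-\<theta>)/a + \<theta>/b - \<kappa> = (1-\<theta>) * (1/a - \<kappa>) + \<theta> * (1/b - \<kappa>)" by (simp add: algebra_simps)
    also have "\<dots> > 0" using th k by (intro add_pos_pos mult_pos_pos) auto
    finally show ?thesis .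
  qed
  have "1/a \<le> 1/cq" "1/b \<le> 1/cq" using ab by (auto intro: divide_left_mono)
  hence "(1-\<theta>) * (1/a) + \<theta> * (1/b) \<le> (1-\<theta>) * (1/cq) + \<theta> * (1/cq)" using th by (intro add_mono mult_left_mono) auto
  also have "\<dots> = 1/cq" by (metis add_divide_distrib diff_add_cancel times_divide_eq_right mult_1_right)
  finally have "(1-\<theta>)/a + \<theta>/b - \<kappa> \<le> 1/cq" using k by simp
  hence "1/(1/cq) \<le> 1/((1-\<theta>)/a + \<theta>/b - \<kappa>)" using dpos ab(1) by (intro divide_left_mono) auto
  thus "cq \<le> 1/(1/H \<theta> a b - \<kappa>)" unfolding e by simp
qed

lemma exp_r:
  fixes a b r \<theta> :: real
  assumes th: "0 < \<theta>" "\<theta> < 1" and r: "0 < r" "r < a" "r < b"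
  shows "0 < 1/(1/r - 1/a)" "0 < 1/(1/r - 1/b)" "r \<le> 1/(1/r - 1/H \<theta> a b)"
    "1/(1/(1/r - 1/H \<theta> a b)) = (1-\<theta>)/(1/(1/r - 1/a)) + \<theta>/(1/(1/r - 1/b))"
proof -
  have ia: "1/a < 1/r" "1/b < 1/r" using r by (auto intro: divide_strict_left_mono)
  show "0 < 1/(1/r - 1/a)" "0 < 1/(1/r - 1/b)" using ia by auto
  have e: "1/H \<theta> a b = (1-\<theta>)/a + \<theta>/b" unfolding H_def by simp
  have e1: "1/r = (1-\<theta>)/r + \<theta>/r" by (metis add_divide_distrib diff_add_cancel)
  have e2: "(1-\<theta>) * (1/r - 1/a) + \<theta> * (1/r - 1/b) = ((1-\<theta>)/r + \<theta>/r) - ((1-\<theta>)/a + \<theta>/b)"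
    by (simp add: algebra_simps)
  show "1/(1/(1/r - 1/H \<theta> a b)) = (1-\<theta>)/(1/(1/r - 1/a)) + \<theta>/(1/(1/r - 1/b))"
    unfolding e using e1 e2 by simp
  have dpos: "0 < 1/r - ((1-\<theta>)/a + \<theta>/b)"
  proof -
    have "1/r - ((1-\<theta>)/a + \<theta>/b) = (1-\<theta>) * (1/r - 1/a) + \<theta> * (1/r - 1/b)"
      using e1 e2 by simp
    also have "\<dots> > 0" using th ia by (intro add_pos_pos mult_pos_pos) auto
    finally show ?thesis .
  qed
  have "0 < (1-\<theta>)/a + \<theta>/b" using th r by (intro add_pos_pos) auto
  hence "1/r - ((1-\<theta>)/a + \<theta>/b) \<le> 1/r" by simp
  hence "1/(1/r) \<le> 1/(1/r - ((1-\<theta>)/a + \<theta>/b))" using dpos r(1) by (intro divide_left_mono) auto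
  thus "r \<le> 1/(1/r - 1/H \<theta> a b)" unfolding e by simp
qed

lemma inv_ext_nonneg: "0 < s \<Longrightarrow> 0 \<le> inv_ext s"
  unfolding inv_ext_def by (cases s) auto

lemma inv_ext_lt:
  assumes "0 < y" "ereal y < s" "0 < s" shows "inv_ext s < 1/y"
proof (cases s)
  case (real sr)
  thus ?thesis using assms unfolding inv_ext_def by (auto intro: divide_strict_left_mono)
qed (use assms in \<open>auto simp: inv_ext_def\<close>)

lemma lux_pos_cube:
  fixes p f :: "'a::euclidean_space \<Rightarrow> real"
  assumes "cube Q" "p \<in> borel_measurable lebesgue" "f \<in> borel_measurable lebesgue"
    "AE x in lebesgue. 0 < p x" "AE x in lebesgue. x \<in> Q \<longrightarrow> f x \<noteq> 0"
  shows "0 < lux p f"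
proof (rule ccontr)
  assume "\<not> 0 < lux p f"
  hence "lux p f = 0" by (simp add: not_less)
  hence "AE x in lebesgue. 0 < p x \<longrightarrow> f x = 0" using lux_zero_AE assms(2,3) by blast
  hence "AE x in lebesgue. x \<notin> Q" using assms(4,5) by eventually_elim auto
  thus False using cube_not_AE[OF assms(1)] by simp
qed

lemma alg:
  fixes a K \<alpha> \<beta> L0 L1 :: real and M0 M1 :: "nat \<Rightarrow> real"
  assumes "0 < a" "0 \<le> L0" "0 \<le> L1" "\<forall>j<m. 0 \<le> M0 j" "\<forall>j<m. 0 \<le> M1 j" "\<alpha> + \<beta> = 1"
  shows "a * (K * L0 powr \<alpha> * L1 powr \<beta>) * (\<Prod>j<m. K * M0 j powr \<alpha> * M1 j powr \<beta>)
     = K^(Suc m) * (a * L0 * (\<Prod>j<m. M0 j)) powr \<alpha> * (a * L1 * (\<Prod>j<m. M1 j)) powr \<beta>"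
proof -
  have p0: "0 \<le> (\<Prod>j<m. M0 j)" "0 \<le> (\<Prod>j<m. M1 j)" using assms by (auto intro: prod_nonneg)
  have aa: "a = a powr \<alpha> * a powr \<beta>" using assms by (simp add: powr_add[symmetric])
  have "(\<Prod>j<m. K * M0 j powr \<alpha> * M1 j powr \<beta>) = K^m * (\<Prod>j<m. M0 j) powr \<alpha> * (\<Prod>j<m. M1 j) powr \<beta>"
    by (simp add: prod.distrib prod_powr_distrib)
  moreover have "(a * L0 * (\<Prod>j<m. M0 j)) powr \<alpha> = a powr \<alpha> * L0 powr \<alpha> * (\<Prod>j<m. M0 j) powr \<alpha>"
    using assms p0 by (simp add: powr_mult)
  moreover have "(a * L1 * (\<Prod>j<m. M1 j)) powr \<beta> = a powr \<beta> * L1 powr \<beta> * (\<Prod>j<m. M1 j) powr \<beta>"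
    using assms p0 by (simp add: powr_mult)
  ultimately show ?thesis by (subst (1) aa) (simp add: algebra_simps)
qed

lemma ind_prod_eq2:
  fixes u v :: "nat \<Rightarrow> 'b \<Rightarrow> real"
  assumes "0 < \<theta>" "\<theta> < 1" "\<forall>j<m. 0 < u j x" "\<forall>j<m. 0 < v j x"
  shows "\<bar>indicator Q x * (\<Prod>j<m. u j x powr (1-\<theta>) * v j x powr \<theta>)\<bar>
     \<le> \<bar>indicator Q x * (\<Prod>j<m. u j x)\<bar> powr (1-\<theta>) * \<bar>indicator Q x * (\<Prod>j<m. v j x)\<bar> powr \<theta>"
  using ind_prod_eq[of \<theta> m "\<lambda>j. u j x" "\<lambda>j. v j x" Q x] assms by simp

lemma fin_factors:
  fixes L :: ennreal and M :: "nat \<Rightarrow> ennreal"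
  assumes "ennreal a * L * (\<Prod>j<m. M j) < top" "0 < a" "0 < L" "\<forall>j<m. 0 < M j"
  shows "L < top" "\<forall>j<m. M j < top"
proof -
  have p0: "(\<Prod>j<m. M j) \<noteq> 0" using assms(4) by auto
  have a0: "ennreal a * L \<noteq> 0" using assms(2,3) by auto
  have "ennreal a * L < top \<and> (\<Prod>j<m. M j) < top" using assms(1) p0 a0 by (simp add: ennreal_mult_less_top)
  hence t: "ennreal a * L < top" "(\<Prod>j<m. M j) < top" by auto
  show "L < top" using t(1) assms(2,3) by (auto simp add: ennreal_mult_less_top)
  show "\<forall>j<m. M j < top"
  proof (intro allI impI)
    fix j assume j: "j < m"
    have "(\<Prod>j<m. M j) \<noteq> top" using t(2) by simp
    hence "\<not> (\<exists>i\<in>{..<m}. M i = top)" using assms(4) by (auto simp add: ennreal_prod_eq_top)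
    thus "M j < top" using j by (simp add: less_top)
  qed
qed

lemma ennreal_triple:
  fixes M :: "nat \<Rightarrow> real"
  assumes "0 \<le> a" "0 \<le> L" "\<forall>j<m. 0 \<le> M j"
  shows "ennreal a * ennreal L * (\<Prod>j<m. ennreal (M j)) = ennreal (a * L * (\<Prod>j<m. M j))"
proof -
  have "(\<Prod>j<m. ennreal (M j)) = ennreal (\<Prod>j<m. M j)" using assms by (intro prod_ennreal) auto
  moreover have "0 \<le> (\<Prod>j<m. M j)" using assms by (intro prod_nonneg) auto
  ultimately show ?thesis using assms by (simp add: ennreal_mult)
qed

lemma enn2real_le_of:
  assumes "x \<le> ennreal y" "0 \<le> y" shows "enn2real x \<le> y"
  using enn2real_mono[OF assms(1)] assms(2) by simp

lemma part2:
  fixes Pa Pb :: "nat \<Rightarrow> 'a::euclidean_space \<Rightarrow> real" and qa qb :: "'a \<Rightarrow> real"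
    and m :: nat and \<gamma> \<theta> :: real and r :: "nat \<Rightarrow> real" and s :: ereal
  assumes adm0: "proper_admissible m Pa qa r s \<gamma>"
    and adm1: "proper_admissible m Pb qb r s \<gamma>"
    and th: "0 < \<theta>" "\<theta> < 1"
  shows "\<exists>C::real. 0 < C \<and>
         (\<forall>w0 w1. in_Aclass m Pa qa r s \<gamma> w0 \<and> in_Aclass m Pb qb r s \<gamma> w1 \<longrightarrow>
            (let w = (\<lambda>j x. w0 j x powr (1 - \<theta>) * w1 j x powr \<theta>) in
              in_Aclass m (\<lambda>j x. H \<theta> (Pa j x) (Pb j x)) (\<lambda>x. H \<theta> (qa x) (qb x)) r s \<gamma> w
              \<and> Aconst m (\<lambda>j x. H \<theta> (Pa j x) (Pb j x)) (\<lambda>x. H \<theta> (qa x) (qb x)) r s \<gamma> w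
                  \<le> ennreal (C * enn2real (Aconst m Pa qa r s \<gamma> w0) powr (1 - \<theta>)
                               * enn2real (Aconst m Pb qb r s \<gamma> w1) powr \<theta>)))"
proof -
  note A0 = adm0[unfolded proper_admissible_def admissible_def]
  note A1 = adm1[unfolded proper_admissible_def admissible_def]
  define iv where "iv = inv_ext s"
  have iv0: "0 \<le> iv" unfolding iv_def using A0 by (intro inv_ext_nonneg) auto
  define eqa where "eqa = (\<lambda>x. 1 / (1 / qa x - iv))"
  define eqb where "eqb = (\<lambda>x. 1 / (1 / qb x - iv))"
  define eqt where "eqt = (\<lambda>x. 1 / (1 / H \<theta> (qa x) (qb x) - iv))"
  define era where "era = (\<lambda>j x. 1 / (1 / r j - 1 / Pa j x))"
  define erb where "erb = (\<lambda>j x. 1 / (1 / r j - 1 / Pb j x))"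
  define ert where "ert = (\<lambda>j x. 1 / (1 / r j - 1 / H \<theta> (Pa j x) (Pb j x)))"
  define cq where "cq = min (pminus qa) (pminus qb)"
  define rm where "rm = Min (r ` {..<m})"
  define c where "c = min cq rm"
  have m1: "1 \<le> m" using A0 by simp
  have Pq: "Defs.P0 qa" "Defs.P0 qb" using A0 A1 by auto
  have cqp: "0 < cq" unfolding cq_def using Pq unfolding P0_def by auto
  have rmle: "rm \<le> r j" if "j < m" for j unfolding rm_def using that by (intro Min_le) auto
  have rmp: "0 < rm" unfolding rm_def using m1 A0 by (subst Min_gr_iff) (auto simp: lessThan_empty_iff)
  have cp: "0 < c" unfolding c_def using cqp rmp by simp
  have qam: "qa \<in> borel_measurable lebesgue" "qb \<in> borel_measurable lebesgue" using Pq unfolding P0_def by auto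
  have Pam: "Pa j \<in> borel_measurable lebesgue" "Pb j \<in> borel_measurable lebesgue" if "j < m" for j
    using A0 A1 that unfolding P0_def by auto
  have eqm: "eqa \<in> borel_measurable lebesgue" "eqb \<in> borel_measurable lebesgue"
    using qam unfolding eqa_def eqb_def by measurable
  have erm: "era j \<in> borel_measurable lebesgue" "erb j \<in> borel_measurable lebesgue" if "j < m" for j
    using Pam[OF that] unfolding era_def erb_def by measurable
  have EQ: "AE x in lebesgue. 0 < eqa x \<and> 0 < eqb x \<and> c \<le> eqt x \<and> 1 / eqt x = (1-\<theta>)/eqa x + \<theta>/eqb x"
    using P0_AE(1)[OF Pq(1)] P0_AE(1)[OF Pq(2)]
  proof eventually_elim
    case (elim x)
    have pos: "0 < pminus qa" "0 < pminus qb" using P0_AE(2) Pq by auto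
    have ppa: "ereal (pplus qa) < s" "ereal (pplus qb) < s" using A0 A1 by auto
    have "ereal (qa x) \<le> ereal (pplus qa)" "ereal (qb x) \<le> ereal (pplus qb)" using elim by auto
    hence qs: "ereal (qa x) < s" "ereal (qb x) < s"
      using order.strict_trans1[OF _ ppa(1)] order.strict_trans1[OF _ ppa(2)] by blast+
    have qp: "0 < qa x" "0 < qb x" using elim pos by auto
    have k: "iv < 1 / qa x" "iv < 1 / qb x" unfolding iv_def using qs qp A0
      by (auto intro!: inv_ext_lt)
    have cqb: "cq \<le> qa x" "cq \<le> qb x" unfolding cq_def using elim by auto
    note E = exp_q[OF th cqp cqb iv0 k]
    show ?case unfolding eqa_def eqb_def eqt_def using E c_def by auto
  qed
  have ER: "AE x in lebesgue. 0 < era j x \<and> 0 < erb j x \<and> c \<le> ert j x \<and> 1 / ert j x = (1-\<theta>)/era j x + \<theta>/erb j x"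
    if j: "j < m" for j
  proof -
    have Pj: "Defs.P0 (Pa j)" "Defs.P0 (Pb j)" "r j < pminus (Pa j)" "r j < pminus (Pb j)" "0 < r j"
      using A0 A1 j by auto
    show ?thesis using P0_AE(1)[OF Pj(1)] P0_AE(1)[OF Pj(2)]
    proof eventually_elim
      case (elim x)
      have "r j < Pa j x" "r j < Pb j x" using elim Pj by auto
      note E = exp_r[OF th Pj(5) this]
      have "c \<le> r j" unfolding c_def using rmle[OF j] by simp
      thus ?case unfolding era_def erb_def ert_def using E by auto
    qed
  qed
  define K where "K = 2 powr (1/c)"
  have Kp: "0 < K" unfolding K_def by simp
  define C where "C = K ^ Suc m"
  have Cp: "0 < C" unfolding C_def using Kp by simp
  define e where "e = \<gamma> - (1 / rvec m r - iv)"
  show ?thesis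
  proof (intro exI[of _ C] conjI allI impI Cp)
    fix w0 w1 :: "nat \<Rightarrow> 'a \<Rightarrow> real"
    assume hw: "in_Aclass m Pa qa r s \<gamma> w0 \<and> in_Aclass m Pb qb r s \<gamma> w1"
    define w where "w = (\<lambda>j x. w0 j x powr (1 - \<theta>) * w1 j x powr \<theta>)"
    have W0: "\<forall>j<m. weight (w0 j)" "Aconst m Pa qa r s \<gamma> w0 < top" using hw unfolding in_Aclass_def by auto
    have W1: "\<forall>j<m. weight (w1 j)" "Aconst m Pb qb r s \<gamma> w1 < top" using hw unfolding in_Aclass_def by auto
    have w0p: "AE x in lebesgue. \<forall>j<m. 0 < w0 j x" by (rule AE_weights[OF W0(1)])
    have w1p: "AE x in lebesgue. \<forall>j<m. 0 < w1 j x" by (rule AE_weights[OF W1(1)])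
    have w0m: "w0 j \<in> borel_measurable lebesgue" if "j < m" for j using W0(1) that unfolding weight_def by auto
    have w1m: "w1 j \<in> borel_measurable lebesgue" if "j < m" for j using W1(1) that unfolding weight_def by auto
    have wm: "w j \<in> borel_measurable lebesgue" if "j < m" for j
      using w0m[OF that] w1m[OF that] unfolding w_def by measurable
    have wp: "AE x in lebesgue. \<forall>j<m. 0 < w j x" using w0p w1p unfolding w_def by eventually_elim (auto intro!: mult_pos_pos)
    define A0r where "A0r = enn2real (Aconst m Pa qa r s \<gamma> w0)"
    define A1r where "A1r = enn2real (Aconst m Pb qb r s \<gamma> w1)"
    have A0e: "Aconst m Pa qa r s \<gamma> w0 = ennreal A0r" unfolding A0r_def using W0(2) by (simp add: less_top)
    have A1e: "Aconst m Pb qb r s \<gamma> w1 = ennreal A1r" unfolding A1r_def using W1(2) by (simp add: less_top)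
    have A0p: "0 \<le> A0r" "0 \<le> A1r" unfolding A0r_def A1r_def by auto
    have cubeb: "ennreal (measure lebesgue Q powr e) * lux eqt (\<lambda>x. indicator Q x * (\<Prod>j<m. w j x))
        * (\<Prod>j<m. lux (ert j) (\<lambda>x. indicator Q x / w j x))
        \<le> ennreal (C * A0r powr (1 - \<theta>) * A1r powr \<theta>)" if Q: "cube Q" for Q
    proof -
      define a where "a = measure lebesgue Q powr e"
      define f0 where "f0 = (\<lambda>x. indicator Q x * (\<Prod>j<m. w0 j x))"
      define f1 where "f1 = (\<lambda>x. indicator Q x * (\<Prod>j<m. w1 j x))"
      define g where "g = (\<lambda>x. indicator Q x * (\<Prod>j<m. w j x))"
      define h0 where "h0 = (\<lambda>j x. indicator Q x / w0 j x)"
      define h1 where "h1 = (\<lambda>j x. indicator Q x / w1 j x)"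
      define hg where "hg = (\<lambda>j x. indicator Q x / w j x)"
      have a0: "0 \<le> a" unfolding a_def by simp
      have "ennreal a * lux eqt g * (\<Prod>j<m. lux (ert j) (hg j)) \<le> ennreal (C * A0r powr (1 - \<theta>) * A1r powr \<theta>)"
      proof (cases "a = 0")
        case True thus ?thesis by simp
      next
        case False
        hence ap: "0 < a" using a0 by simp
        have Qm: "Q \<in> sets lebesgue" using Q unfolding cube_def by auto
        have f0m: "f0 \<in> borel_measurable lebesgue" unfolding f0_def
          by (intro borel_measurable_times borel_measurable_indicator borel_measurable_prod Qm w0m) auto
        have f1m: "f1 \<in> borel_measurable lebesgue" unfolding f1_def
          by (intro borel_measurable_times borel_measurable_indicator borel_measurable_prod Qm w1m) auto
        have h0m: "h0 j \<in> borel_measurable lebesgue" if "j < m" for j unfolding h0_def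
          by (intro borel_measurable_divide borel_measurable_indicator Qm w0m that)
        have h1m: "h1 j \<in> borel_measurable lebesgue" if "j < m" for j unfolding h1_def
          by (intro borel_measurable_divide borel_measurable_indicator Qm w1m that)
        have eqap: "AE x in lebesgue. 0 < eqa x" "AE x in lebesgue. 0 < eqb x" using EQ by (auto elim: eventually_mono)
        have erap: "AE x in lebesgue. 0 < era j x" "AE x in lebesgue. 0 < erb j x" if "j < m" for j
          using ER[OF that] by (auto elim: eventually_mono)
        have L0p: "0 < lux eqa f0"
        proof (rule lux_pos_cube[OF Q eqm(1) f0m eqap(1)])
          show "AE x in lebesgue. x \<in> Q \<longrightarrow> f0 x \<noteq> 0" using w0p unfolding f0_def
            by eventually_elim (auto simp: prod_pos less_imp_neq[symmetric])
        qed
        have L1p: "0 < lux eqb f1"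
        proof (rule lux_pos_cube[OF Q eqm(2) f1m eqap(2)])
          show "AE x in lebesgue. x \<in> Q \<longrightarrow> f1 x \<noteq> 0" using w1p unfolding f1_def
            by eventually_elim (auto simp: prod_pos less_imp_neq[symmetric])
        qed
        have M0p: "\<forall>j<m. 0 < lux (era j) (h0 j)"
        proof (intro allI impI)
          fix j assume j: "j < m"
          show "0 < lux (era j) (h0 j)"
          proof (rule lux_pos_cube[OF Q erm(1)[OF j] h0m[OF j] erap(1)[OF j]])
            show "AE x in lebesgue. x \<in> Q \<longrightarrow> h0 j x \<noteq> 0" using w0p unfolding h0_def
              by eventually_elim (use j in auto)
          qed
        qed
        have M1p: "\<forall>j<m. 0 < lux (erb j) (h1 j)"
        proof (intro allI impI)
          fix j assume j: "j < m"
          show "0 < lux (erb j) (h1 j)"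
          proof (rule lux_pos_cube[OF Q erm(2)[OF j] h1m[OF j] erap(2)[OF j]])
            show "AE x in lebesgue. x \<in> Q \<longrightarrow> h1 j x \<noteq> 0" using w1p unfolding h1_def
              by eventually_elim (use j in auto)
          qed
        qed
        have X0: "ennreal a * lux eqa f0 * (\<Prod>j<m. lux (era j) (h0 j)) \<le> Aconst m Pa qa r s \<gamma> w0"
          unfolding Aconst_def
          by (rule SUP_upper2[of Q]) (use Q in \<open>simp_all add: a_def e_def eqa_def era_def f0_def h0_def iv_def\<close>)
        have X1: "ennreal a * lux eqb f1 * (\<Prod>j<m. lux (erb j) (h1 j)) \<le> Aconst m Pb qb r s \<gamma> w1"
          unfolding Aconst_def
          by (rule SUP_upper2[of Q]) (use Q in \<open>simp_all add: a_def e_def eqb_def erb_def f1_def h1_def iv_def\<close>)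
        have F0: "lux eqa f0 < top" "\<forall>j<m. lux (era j) (h0 j) < top"
          using fin_factors[OF le_less_trans[OF X0 W0(2)] ap L0p M0p] by auto
        have F1: "lux eqb f1 < top" "\<forall>j<m. lux (erb j) (h1 j) < top"
          using fin_factors[OF le_less_trans[OF X1 W1(2)] ap L1p M1p] by auto
        define L0r where "L0r = enn2real (lux eqa f0)"
        define L1r where "L1r = enn2real (lux eqb f1)"
        define M0r where "M0r = (\<lambda>j. enn2real (lux (era j) (h0 j)))"
        define M1r where "M1r = (\<lambda>j. enn2real (lux (erb j) (h1 j)))"
        have L0e: "lux eqa f0 = ennreal L0r" unfolding L0r_def using F0 by (simp add: less_top)
        have L1e: "lux eqb f1 = ennreal L1r" unfolding L1r_def using F1 by (simp add: less_top)
        have M0e: "(\<Prod>j<m. lux (era j) (h0 j)) = (\<Prod>j<m. ennreal (M0r j))"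
          unfolding M0r_def using F0 by (intro prod.cong) (auto simp: less_top)
        have M1e: "(\<Prod>j<m. lux (erb j) (h1 j)) = (\<Prod>j<m. ennreal (M1r j))"
          unfolding M1r_def using F1 by (intro prod.cong) (auto simp: less_top)
        have nn: "0 \<le> L0r" "0 \<le> L1r" "\<forall>j<m. 0 \<le> M0r j" "\<forall>j<m. 0 \<le> M1r j"
          unfolding L0r_def L1r_def M0r_def M1r_def by auto
        have R0: "a * L0r * (\<Prod>j<m. M0r j) \<le> A0r"
        proof -
          have "ennreal (a * L0r * (\<Prod>j<m. M0r j)) \<le> ennreal A0r"
            using X0 unfolding L0e M0e A0e ennreal_triple[OF a0 nn(1) nn(3)] .
          thus ?thesis using A0p by (simp add: ennreal_le_iff)
        qed
        have R1: "a * L1r * (\<Prod>j<m. M1r j) \<le> A1r"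
        proof -
          have "ennreal (a * L1r * (\<Prod>j<m. M1r j)) \<le> ennreal A1r"
            using X1 unfolding L1e M1e A1e ennreal_triple[OF a0 nn(2) nn(4)] .
          thus ?thesis using A0p by (simp add: ennreal_le_iff)
        qed
        have aegq: "AE x in lebesgue. \<bar>g x\<bar> \<le> \<bar>f0 x\<bar> powr (1-\<theta>) * \<bar>f1 x\<bar> powr \<theta>"
          using w0p w1p unfolding g_def f0_def f1_def w_def
          by eventually_elim (rule ind_prod_eq2[OF th])
        have Hq: "lux eqt g \<le> ennreal (K * L0r powr (1-\<theta>) * L1r powr \<theta>)"
          unfolding K_def L0r_def L1r_def
          by (rule lux_holder[OF th cp eqm(1) eqm(2) f0m f1m EQ aegq L0p F0(1) L1p F1(1)])
        have Hr: "lux (ert j) (hg j) \<le> ennreal (K * M0r j powr (1-\<theta>) * M1r j powr \<theta>)" if j: "j < m" for j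
        proof -
          have aeg: "AE x in lebesgue. \<bar>hg j x\<bar> \<le> \<bar>h0 j x\<bar> powr (1-\<theta>) * \<bar>h1 j x\<bar> powr \<theta>"
            using w0p w1p unfolding hg_def h0_def h1_def w_def
            by eventually_elim (rule ind_div_eq[OF th], use j in auto)
          show ?thesis unfolding K_def M0r_def M1r_def
            by (rule lux_holder[OF th cp erm(1)[OF j] erm(2)[OF j] h0m[OF j] h1m[OF j] ER[OF j] aeg])
               (use M0p M1p F0 F1 j in auto)
        qed
        define Ltr where "Ltr = enn2real (lux eqt g)"
        define Mtr where "Mtr = (\<lambda>j. enn2real (lux (ert j) (hg j)))"
        have Lte: "lux eqt g = ennreal Ltr" unfolding Ltr_def using Hq
          by (metis ennreal_enn2real ennreal_less_top less_top order.strict_trans1)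
        have Mte: "(\<Prod>j<m. lux (ert j) (hg j)) = (\<Prod>j<m. ennreal (Mtr j))"
          unfolding Mtr_def using Hr
          by (intro prod.cong) (auto, metis ennreal_enn2real ennreal_less_top less_top order.strict_trans1)
        have nt: "0 \<le> Ltr" "\<forall>j<m. 0 \<le> Mtr j" unfolding Ltr_def Mtr_def by auto
        have Ltb: "Ltr \<le> K * L0r powr (1-\<theta>) * L1r powr \<theta>"
          unfolding Ltr_def by (rule enn2real_le_of[OF Hq]) (use Kp in simp)
        have Mtb: "Mtr j \<le> K * M0r j powr (1-\<theta>) * M1r j powr \<theta>" if "j < m" for j
          unfolding Mtr_def by (rule enn2real_le_of[OF Hr[OF that]]) (use Kp in simp)
        have "ennreal a * lux eqt g * (\<Prod>j<m. lux (ert j) (hg j)) = ennreal (a * Ltr * (\<Prod>j<m. Mtr j))"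
          unfolding Lte Mte by (rule ennreal_triple[OF a0 nt(1) nt(2)])
        also have "\<dots> \<le> ennreal (a * (K * L0r powr (1-\<theta>) * L1r powr \<theta>) * (\<Prod>j<m. K * M0r j powr (1-\<theta>) * M1r j powr \<theta>))"
          using Ltb Mtb nt a0 by (intro ennreal_leI mult_mono mult_left_mono prod_mono prod_nonneg) auto
        also have "\<dots> = ennreal (K^(Suc m) * (a * L0r * (\<Prod>j<m. M0r j)) powr (1-\<theta>) * (a * L1r * (\<Prod>j<m. M1r j)) powr \<theta>)"
        proof -
          have ab: "1 - \<theta> + \<theta> = 1" by simp
          show ?thesis by (rule arg_cong[where f=ennreal]) (rule alg[OF ap nn ab])
        qed
        also have "\<dots> \<le> ennreal (C * A0r powr (1 - \<theta>) * A1r powr \<theta>)"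
          unfolding C_def using R0 R1 th Kp nn a0
          by (intro ennreal_leI mult_mono mult_left_mono powr_mono2) (auto intro!: mult_nonneg_nonneg prod_nonneg)
        finally show ?thesis .
      qed
      thus ?thesis unfolding a_def g_def hg_def .
    qed
    have bound: "Aconst m (\<lambda>j x. H \<theta> (Pa j x) (Pb j x)) (\<lambda>x. H \<theta> (qa x) (qb x)) r s \<gamma> w
        \<le> ennreal (C * A0r powr (1 - \<theta>) * A1r powr \<theta>)"
      unfolding Aconst_def
    proof (rule SUP_least)
      fix Q :: "'a set" assume "Q \<in> {Q. cube Q}"
      thus "ennreal (measure lebesgue Q powr (\<gamma> - (1 / rvec m r - inv_ext s))) *
         lux (\<lambda>x. 1 / (1 / H \<theta> (qa x) (qb x) - inv_ext s)) (\<lambda>x. indicator Q x * (\<Prod>j<m. w j x)) *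
         (\<Prod>j<m. lux (\<lambda>x. 1 / (1 / r j - 1 / H \<theta> (Pa j x) (Pb j x))) (\<lambda>x. indicator Q x / w j x))
         \<le> ennreal (C * A0r powr (1 - \<theta>) * A1r powr \<theta>)"
        using cubeb[of Q] unfolding e_def eqt_def ert_def iv_def by simp
    qed
    have "in_Aclass m (\<lambda>j x. H \<theta> (Pa j x) (Pb j x)) (\<lambda>x. H \<theta> (qa x) (qb x)) r s \<gamma> w"
      unfolding in_Aclass_def
    proof
      show "\<forall>j<m. weight (w j)" unfolding weight_def using wm wp by (auto elim: eventually_mono)
      show "Aconst m (\<lambda>j x. H \<theta> (Pa j x) (Pb j x)) (\<lambda>x. H \<theta> (qa x) (qb x)) r s \<gamma> w < top"
        using bound by (simp add: order.strict_trans1)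
    qed
    thus "let w = (\<lambda>j x. w0 j x powr (1 - \<theta>) * w1 j x powr \<theta>) in
              in_Aclass m (\<lambda>j x. H \<theta> (Pa j x) (Pb j x)) (\<lambda>x. H \<theta> (qa x) (qb x)) r s \<gamma> w
              \<and> Aconst m (\<lambda>j x. H \<theta> (Pa j x) (Pb j x)) (\<lambda>x. H \<theta> (qa x) (qb x)) r s \<gamma> w
                  \<le> ennreal (C * enn2real (Aconst m Pa qa r s \<gamma> w0) powr (1 - \<theta>)
                               * enn2real (Aconst m Pb qb r s \<gamma> w1) powr \<theta>)"
      using bound unfolding w_def[symmetric] A0r_def A1r_def Let_def by simp
  qed
qed

theorem mainTheorem8:
  fixes m :: nat and \<gamma> \<theta> :: real and r :: "nat \<Rightarrow> real" and s :: ereal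
    and P0 P1 :: "nat \<Rightarrow> 'a::euclidean_space \<Rightarrow> real" and q0 q1 :: "'a \<Rightarrow> real"
  assumes adm0: "proper_admissible m P0 q0 r s \<gamma>"
    and adm1: "proper_admissible m P1 q1 r s \<gamma>"
    and theta: "0 < \<theta>" "\<theta> < 1"
  defines "P \<equiv> (\<lambda>j x. 1 / ((1 - \<theta>) / P0 j x + \<theta> / P1 j x))"
    and "q \<equiv> (\<lambda>x. 1 / ((1 - \<theta>) / q0 x + \<theta> / q1 x))"
  shows "proper_admissible m P q r s \<gamma>
    \<and> (\<exists>C::real. 0 < C \<and>
         (\<forall>w0 w1. in_Aclass m P0 q0 r s \<gamma> w0 \<and> in_Aclass m P1 q1 r s \<gamma> w1 \<longrightarrow>
            (let w = (\<lambda>j x. w0 j x powr (1 - \<theta>) * w1 j x powr \<theta>) in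
              in_Aclass m P q r s \<gamma> w
              \<and> Aconst m P q r s \<gamma> w
                  \<le> ennreal (C * enn2real (Aconst m P0 q0 r s \<gamma> w0) powr (1 - \<theta>)
                               * enn2real (Aconst m P1 q1 r s \<gamma> w1) powr \<theta>))))"
proof -
  have Pe: "P = (\<lambda>j x. H \<theta> (P0 j x) (P1 j x))" unfolding P_def H_def ..
  have qe: "q = (\<lambda>x. H \<theta> (q0 x) (q1 x))" unfolding q_def H_def ..
  show ?thesis unfolding Pe qe
    using part1[OF adm0 adm1 theta] part2[OF adm0 adm1 theta] by blast
qed

end
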